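(* Fix a positive integer $n$ and a nonzero $n$-partition $\lambda$ with $\lambda_n=0$. For every $n$-semistandard tableau $T$ of shape $\lambda$, $Y_\lambda(\pi_T)=S(T)$.
   Context: Identify $\lambda=(\lambda_1,\dots,\lambda_n)$ with its Young diagram; $c_j$ is the length of column $j$; $\zeta_1<\dots<\zeta_d$ are the distinct column lengths. For a permutation $\phi$ (one-line form), $Y_\lambda(\phi)$ is the tableau of shape $\lambda$ whose columns of length $\zeta_h$ contain $\phi_1,\dots,\phi_{\zeta_h}$ in increasing order ($1\le h\le d$). Write $(j,i)$ for the box in column $j$, row $i$. Reading order: $(l,k)\le(j,i)$ iff $l<j$, or $l=j$ and $k\ge i$; convention $(j,c_j+1)$ means $(j-1,1)$. An $n$-semistandard tableau $T$ of shape $\lambda$ has entries in $[n]$, weakly increasing along rows, strictly increasing down columns; $T(j,i)$ is its entry, $C_j$ its $j$-th column. Scanning tableau: the EWIS of a sequence $x_1,x_2,\dots$ is $x_{a_1},x_{a_2},\dots$ with $a_1=1$ and $a_b$ the smallest index $>a_{b-1}$ with $x_{a_b}\ge x_{a_{b-1}}$. For each column $j$ and $i=c_j,\dots,1$ in turn: delete the boxes of previously computed $P(T;j,k)$, $k>i$; form the sequence of entries in the lowest box of each of columns $j,\dots,\lambda_1$ of the current shape (skipping empty columns); $P(T;j,i)$ is the set of locations of the terms of its EWIS. $S(T)$ is the filling of $\lambda$ whose entry at $(j,i)$ is $T$ at the last location of $P(T;j,i)$. Greedy procedure: $\pi^{(1,1)}$ has first $c_1$ entries those of $C_1$ increasing,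 followed by the rest of $[n]$ increasing. For $(j,i)$ with $j\ge2$ in reading order from $(2,c_2)$ to $(\lambda_1,1)$, define $\pi^{(j,i)}$ from $\pi:=\pi^{(j,i+1)}$: if $T(j-1,i)=T(j,i)$ set $\pi^{(j,i)}=\pi$; otherwise let $i_0=i$, and given $i_{x-1}$ with $\pi_{i_{x-1}}<T(j,i)$ let $i_x$ be the smallest index $>c_j$ with $\pi_{i_{x-1}}<\pi_{i_x}\le T(j,i)$, stopping at $i_m$ with $\pi_{i_m}=T(j,i)$; set $\pi^{(j,i)}_{i_x}=\pi_{i_{x-1}}$ ($1\le x\le m$), $\pi^{(j,i)}_{i_0}=\pi_{i_m}$, others unchanged. $\pi_T:=\pi^{(\lambda_1,1)}$. *)

theory Defs
  imports Main
begin

(* An n-partition lambda = (lambda_1,...,lambda_n) is a list lam of length n,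
   with lam ! (k-1) = lambda_k.  Boxes are pairs (j,i) = (column j, row i),
   1-based.  Tableaux and fillings are functions nat => nat => nat, T j i being
   the entry in box (j,i); only values on boxes of the shape matter.
   Permutations in one-line form are functions nat => nat, phi p being phi_p
   for positions p in {1..n}. *)

definition is_partition :: "nat \<Rightarrow> nat list \<Rightarrow> bool" where
  "is_partition n lam \<longleftrightarrow> length lam = n \<and> sorted_wrt (\<ge>) lam"

definition lam1 :: "nat list \<Rightarrow> nat" where
  "lam1 lam = lam ! 0"

definition col_len :: "nat list \<Rightarrow> nat \<Rightarrow> nat" where
  "col_len lam j = length (filter (\<lambda>r. j \<le> r) lam)"

definition shape :: "nat list \<Rightarrow> (nat \<times> nat) set" where
  "shape lam = {(j, i). 1 \<le> j \<and> j \<le> lam1 lam \<and> 1 \<le> i \<and> i \<le> col_len lam j}"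

definition semistandard :: "nat \<Rightarrow> nat list \<Rightarrow> (nat \<Rightarrow> nat \<Rightarrow> nat) \<Rightarrow> bool" where
  "semistandard n lam T \<longleftrightarrow>
     (\<forall>(j, i) \<in> shape lam. 1 \<le> T j i \<and> T j i \<le> n) \<and>
     (\<forall>j i. (j, i) \<in> shape lam \<and> (j + 1, i) \<in> shape lam \<longrightarrow> T j i \<le> T (j + 1) i) \<and>
     (\<forall>j i. (j, i) \<in> shape lam \<and> (j, i + 1) \<in> shape lam \<longrightarrow> T j i < T j (i + 1))"

definition Ytab :: "nat list \<Rightarrow> (nat \<Rightarrow> nat) \<Rightarrow> nat \<Rightarrow> nat \<Rightarrow> nat" where
  "Ytab lam phi j i = sorted_list_of_set (phi ` {1..col_len lam j}) ! (i - 1)"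

(* earliest weakly increasing subsequence of a sequence of (location, value) pairs *)
function ewis :: "('l \<times> nat) list \<Rightarrow> ('l \<times> nat) list" where
  "ewis [] = []"
| "ewis (x # xs) = x # ewis (dropWhile (\<lambda>y. snd y < snd x) xs)"
  by pat_completeness auto
termination
  by (relation "measure length") (auto simp: le_imp_less_Suc length_dropWhile_le)

definition rem_rows :: "nat list \<Rightarrow> (nat \<times> nat) set \<Rightarrow> nat \<Rightarrow> nat set" where
  "rem_rows lam D l = {k. 1 \<le> k \<and> k \<le> col_len lam l \<and> (l, k) \<notin> D}"

definition low_seq :: "nat list \<Rightarrow> (nat \<Rightarrow> nat \<Rightarrow> nat) \<Rightarrow> nat \<Rightarrow> (nat \<times> nat) set
                        \<Rightarrow> ((nat \<times> nat) \<times> nat) list" where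
  "low_seq lam T j D =
     concat (map (\<lambda>l. if rem_rows lam D l = {} then []
                      else [((l, Max (rem_rows lam D l)), T l (Max (rem_rows lam D l)))])
                 [j..<lam1 lam + 1])"

definition scan_path :: "nat list \<Rightarrow> (nat \<Rightarrow> nat \<Rightarrow> nat) \<Rightarrow> nat \<Rightarrow> (nat \<times> nat) set
                          \<Rightarrow> (nat \<times> nat) list" where
  "scan_path lam T j D = map fst (ewis (low_seq lam T j D))"

(* boxes deleted in column j after computing P(T;j,c_j),...,P(T;j,c_j-m+1) *)
primrec scan_del :: "nat list \<Rightarrow> (nat \<Rightarrow> nat \<Rightarrow> nat) \<Rightarrow> nat \<Rightarrow> nat \<Rightarrow> (nat \<times> nat) set" where
  "scan_del lam T j 0 = {}"
| "scan_del lam T j (Suc m) = scan_del lam T j m \<union> set (scan_path lam T j (scan_del lam T j m))"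

(* P(T;j,i), as the list of its locations in order *)
definition scanP :: "nat list \<Rightarrow> (nat \<Rightarrow> nat \<Rightarrow> nat) \<Rightarrow> nat \<Rightarrow> nat \<Rightarrow> (nat \<times> nat) list" where
  "scanP lam T j i = scan_path lam T j (scan_del lam T j (col_len lam j - i))"

definition scanS :: "nat list \<Rightarrow> (nat \<Rightarrow> nat \<Rightarrow> nat) \<Rightarrow> nat \<Rightarrow> nat \<Rightarrow> nat" where
  "scanS lam T j i = (case last (scanP lam T j i) of (l, k) \<Rightarrow> T l k)"

definition pi11 :: "nat \<Rightarrow> nat list \<Rightarrow> (nat \<Rightarrow> nat \<Rightarrow> nat) \<Rightarrow> nat \<Rightarrow> nat" where
  "pi11 n lam T p =
     (if 1 \<le> p \<and> p \<le> col_len lam 1 then T 1 p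
      else sorted_list_of_set ({1..n} - T 1 ` {1..col_len lam 1}) ! (p - col_len lam 1 - 1))"

(* the indices i_1, i_2, ... following index p: next index is the smallest
   q > c with pi p < pi q <= t; stops when pi of the current index equals t
   (fuel bounds the length; fallback: stop if no such index exists) *)
fun chain :: "(nat \<Rightarrow> nat) \<Rightarrow> nat \<Rightarrow> nat \<Rightarrow> nat \<Rightarrow> nat \<Rightarrow> nat \<Rightarrow> nat list" where
  "chain pi n c t p 0 = []"
| "chain pi n c t p (Suc f) =
     (if pi p = t then []
      else if (\<exists>q. c < q \<and> q \<le> n \<and> pi p < pi q \<and> pi q \<le> t)
      then (let q = (LEAST q. c < q \<and> q \<le> n \<and> pi p < pi q \<and> pi q \<le> t)
            in q # chain pi n c t q f)
      else [])"

(* for idx = [i_0,...,i_m]: new value at i_x is old value at i_{x-1} (1<=x<=m),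
   new value at i_0 is old value at i_m, others unchanged *)
definition rot_upd :: "(nat \<Rightarrow> nat) \<Rightarrow> nat list \<Rightarrow> nat \<Rightarrow> nat" where
  "rot_upd pi idx =
     (fold (\<lambda>x f. f(idx ! Suc x := pi (idx ! x))) [0..<length idx - 1] pi)
       (hd idx := pi (last idx))"

definition gstep :: "nat \<Rightarrow> nat list \<Rightarrow> (nat \<Rightarrow> nat \<Rightarrow> nat) \<Rightarrow> (nat \<Rightarrow> nat) \<Rightarrow> nat \<times> nat
                      \<Rightarrow> nat \<Rightarrow> nat" where
  "gstep n lam T pi b = (case b of (j, i) \<Rightarrow>
     (if T (j - 1) i = T j i then pi
      else rot_upd pi (i # chain pi n (col_len lam j) (T j i) i n)))"

definition greedy_boxes :: "nat list \<Rightarrow> (nat \<times> nat) list" where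
  "greedy_boxes lam = concat (map (\<lambda>j. map (\<lambda>i. (j, i)) (rev [1..<col_len lam j + 1]))
                                  [2..<lam1 lam + 1])"

definition piT :: "nat \<Rightarrow> nat list \<Rightarrow> (nat \<Rightarrow> nat \<Rightarrow> nat) \<Rightarrow> nat \<Rightarrow> nat" where
  "piT n lam T = fold (\<lambda>b pi. gstep n lam T pi b) (greedy_boxes lam) (pi11 n lam T)"

end

theory Submission
  imports Defs
begin


fun pstep :: "(nat\<Rightarrow>nat\<Rightarrow>nat) \<Rightarrow> (nat\<Rightarrow>nat) \<Rightarrow> nat \<Rightarrow> nat list \<Rightarrow> (nat\<Rightarrow>nat) \<times> nat" where
  "pstep T h v [] = (h, v)"
| "pstep T h v (l#ls) = (if 1 \<le> h l \<and> v \<le> T l (h l)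
      then pstep T (h(l := h l - 1)) (T l (h l)) ls else pstep T h v ls)"

fun multi :: "(nat\<Rightarrow>nat\<Rightarrow>nat) \<Rightarrow> (nat\<Rightarrow>nat) \<Rightarrow> nat list \<Rightarrow> nat list \<Rightarrow> nat list" where
  "multi T h [] ls = []"
| "multi T h (x#xs) ls = (case pstep T h x ls of (h', v) \<Rightarrow> v # multi T h' xs ls)"

fun sopc :: "(nat\<Rightarrow>nat\<Rightarrow>nat) \<Rightarrow> nat \<Rightarrow> nat \<Rightarrow> nat list \<Rightarrow> nat list" where
  "sopc T l k [] = []"
| "sopc T l k (x#xs) = (if 1 \<le> k \<and> x \<le> T l k then T l k # sopc T l (k-1) xs else x # sopc T l k xs)"

fun pth :: "nat list \<Rightarrow> (nat\<Rightarrow>nat\<Rightarrow>nat) \<Rightarrow> (nat\<times>nat) set \<Rightarrow> nat \<Rightarrow> nat list \<Rightarrow> (nat\<times>nat) list" where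
  "pth lam T D v [] = []"
| "pth lam T D v (l#ls) = (if rem_rows lam D l \<noteq> {} \<and> v \<le> T l (Max (rem_rows lam D l))
      then (l, Max (rem_rows lam D l)) # pth lam T D (T l (Max (rem_rows lam D l))) ls
      else pth lam T D v ls)"

lemma ewis_pth:
  "ewis (dropWhile (\<lambda>y. snd y < v) (concat (map (\<lambda>l. if rem_rows lam D l = {} then []
                      else [((l, Max (rem_rows lam D l)), T l (Max (rem_rows lam D l)))]) ls)))
   = map (\<lambda>b. (b, T (fst b) (snd b))) (pth lam T D v ls)"
proof (induction ls arbitrary: v)
  case Nil then show ?case by simp
next
  case (Cons l ls)
  show ?case
  proof (cases "rem_rows lam D l = {}")
    case True then show ?thesis using Cons by simp
  next
    case False
    show ?thesis
    proof (cases "v \<le> T l (Max (rem_rows lam D l))")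
      case True
      then show ?thesis using False Cons[of "T l (Max (rem_rows lam D l))"] by simp
    next
      case F2: False
      then show ?thesis using False Cons[of v] by simp
    qed
  qed
qed

lemma pstep_other: "l \<notin> set ls \<Longrightarrow> fst (pstep T h v ls) l = h l"
  by (induction T h v ls rule: pstep.induct) auto


lemma pstep_upd: "l \<notin> set ls \<Longrightarrow>
   pstep T (h(l := a)) v ls = ((fst (pstep T h v ls))(l := a), snd (pstep T h v ls))"
proof (induction T h v ls rule: pstep.induct)
  case (1 T h v) then show ?case by simp
next
  case (2 T h v l' ls)
  then have ne: "l \<noteq> l'" and nl: "l \<notin> set ls" by auto
  have e: "(h(l := a))(l' := h l' - 1) = (h(l' := h l' - 1))(l := a)" using ne by (auto simp: fun_eq_iff)
  have hl: "(h(l := a)) l' = h l'" using ne by simp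
  show ?case
  proof (cases "1 \<le> h l' \<and> v \<le> T l' (h l')")
    case True
    have "pstep T (h(l := a)) v (l'#ls) = pstep T ((h(l := a))(l' := h l' - 1)) (T l' (h l')) ls"
      using True hl by simp
    also have "\<dots> = pstep T ((h(l' := h l' - 1))(l := a)) (T l' (h l')) ls" by (simp only: e)
    also have "\<dots> = ((fst (pstep T (h(l' := h l' - 1)) (T l' (h l')) ls))(l := a), snd (pstep T (h(l' := h l' - 1)) (T l' (h l')) ls))"
      by (rule 2(1)[OF True nl])
    finally have c1: "pstep T (h(l := a)) v (l'#ls) = ((fst (pstep T (h(l' := h l' - 1)) (T l' (h l')) ls))(l := a), snd (pstep T (h(l' := h l' - 1)) (T l' (h l')) ls))" .
    have c2: "pstep T h v (l'#ls) = pstep T (h(l' := h l' - 1)) (T l' (h l')) ls" using True by simp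
    show ?thesis by (simp only: c1 c2)
  next
    case False
    have "pstep T (h(l := a)) v (l'#ls) = pstep T (h(l := a)) v ls"
      using False hl by (simp only: pstep.simps if_False) 
    moreover have "pstep T h v (l'#ls) = pstep T h v ls" using False by (simp only: pstep.simps if_False)
    ultimately show ?thesis using 2(2)[OF False nl] by (simp only:)
  qed
qed


lemma multi_upd: "l \<notin> set ls \<Longrightarrow> multi T (h(l := a)) xs ls = multi T h xs ls"
proof (induction xs arbitrary: h)
  case Nil then show ?case by simp
next
  case (Cons x xs)
  obtain h1 v where p1: "pstep T h x ls = (h1, v)" by (metis prod.exhaust)
  have "pstep T (h(l := a)) x ls = (h1(l := a), v)" using pstep_upd[OF Cons.prems, of T h a x] p1 by simp
  then show ?case using p1 Cons.IH[OF Cons.prems, of h1] by (simp del: fun_upd_apply)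
qed

lemma multi_cons_col:
  assumes "l \<notin> set ls"
  shows "multi T h xs (l#ls) = multi T h (sopc T l (h l) xs) ls"
  using assms
proof (induction xs arbitrary: h)
  case Nil then show ?case by simp
next
  case (Cons x xs)
  show ?case
  proof (cases "1 \<le> h l \<and> x \<le> T l (h l)")
    case True
    obtain h1 v where p1: "pstep T (h(l := h l - 1)) (T l (h l)) ls = (h1, v)" by (metis prod.exhaust)
    obtain h2 v2 where p2: "pstep T h (T l (h l)) ls = (h2, v2)" by (metis prod.exhaust)
    have hv: "h1 = h2(l := h l - 1)" "v = v2" using pstep_upd[OF Cons.prems, of T h "h l - 1" "T l (h l)"] p1 p2 by auto
    have h1l: "h1 l = h l - 1" using pstep_other[OF Cons.prems, of T "h(l := h l - 1)"] p1 by (metis fst_conv fun_upd_same)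
    have a: "pstep T h x (l#ls) = (h1, v)" using True p1 by (simp only: pstep.simps simp_thms if_True)
    have "multi T h (x#xs) (l#ls) = v # multi T h1 xs (l#ls)" using a by simp
    also have "\<dots> = v # multi T h1 (sopc T l (h l - 1) xs) ls" using Cons.IH[OF Cons.prems, of h1] h1l by simp
    also have "\<dots> = v2 # multi T h2 (sopc T l (h l - 1) xs) ls" using hv multi_upd[OF Cons.prems] by simp
    also have "\<dots> = multi T h (sopc T l (h l) (x#xs)) ls" using True p2 by simp
    finally show ?thesis .
  next
    case False
    obtain h1 v where p1: "pstep T h x ls = (h1, v)" by (metis prod.exhaust)
    have h1l: "h1 l = h l" using pstep_other[OF Cons.prems, of T h x] p1 by simp
    have a: "pstep T h x (l#ls) = (h1, v)" using False p1 by (simp only: pstep.simps if_False)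
    have "multi T h (x#xs) (l#ls) = v # multi T h1 xs (l#ls)" using a by simp
    also have "\<dots> = v # multi T h1 (sopc T l (h l) xs) ls" using Cons.IH[OF Cons.prems, of h1] h1l by simp
    also have "\<dots> = multi T h (x # sopc T l (h l) xs) ls" using p1 by simp
    also have "x # sopc T l (h l) xs = sopc T l (h l) (x#xs)" using False by (simp only: sopc.simps if_False)
    finally show ?thesis .
  qed
qed

lemma multi_nil: "multi T h xs [] = xs"
  by (induction xs) auto

lemma multi_fold:
  "distinct ls \<Longrightarrow> multi T h xs ls = fold (\<lambda>l xs. sopc T l (h l) xs) ls xs"
proof (induction ls arbitrary: xs)
  case Nil then show ?case by (simp add: multi_nil)
next
  case (Cons l ls)
  then show ?case using multi_cons_col[of l ls T h xs] by simp
qed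


lemma rem_rows_union: "rem_rows lam (D \<union> E) l = rem_rows lam D l - {k. (l,k) \<in> E}"
  by (auto simp: rem_rows_def)

lemma pth_cols: "set (pth lam T D v ls) \<subseteq> {b. fst b \<in> set ls}"
  by (induction lam T D v ls rule: pth.induct) auto

lemma pth_take: "rem_rows lam D l \<noteq> {} \<Longrightarrow> v \<le> T l (Max (rem_rows lam D l)) \<Longrightarrow>
   pth lam T D v (l#ls) = (l, Max (rem_rows lam D l)) # pth lam T D (T l (Max (rem_rows lam D l))) ls"
  unfolding pth.simps by (rule if_P) simp

lemma pth_skip: "\<not> (rem_rows lam D l \<noteq> {} \<and> v \<le> T l (Max (rem_rows lam D l))) \<Longrightarrow>
   pth lam T D v (l#ls) = pth lam T D v ls"
  unfolding pth.simps by (rule if_not_P)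

lemma pth_heights:
  assumes "distinct ls" "\<forall>l\<in>set ls. rem_rows lam D l = {1..h l}"
  shows "(\<forall>l\<in>set ls. rem_rows lam (D \<union> set (pth lam T D v ls)) l = {1..fst (pstep T h v ls) l})
     \<and> (pth lam T D v ls = [] \<longrightarrow> snd (pstep T h v ls) = v)
     \<and> (pth lam T D v ls \<noteq> [] \<longrightarrow> snd (pstep T h v ls) = T (fst (last (pth lam T D v ls))) (snd (last (pth lam T D v ls))))"
  using assms
proof (induction ls arbitrary: h v)
  case Nil then show ?case by simp
next
  case (Cons l ls)
  have nl: "l \<notin> set ls" and dls: "distinct ls" using Cons.prems(1) by auto
  have rl: "rem_rows lam D l = {1..h l}" using Cons.prems(2) by simp
  show ?case
  proof (cases "1 \<le> h l \<and> v \<le> T l (h l)")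
    case True
    have mx0: "Max {1..h l} = h l" using True by (intro Max_eqI) auto
    have ne: "rem_rows lam D l \<noteq> {}" and mx: "Max (rem_rows lam D l) = h l" using rl True mx0 by auto
    define P' where "P' = pth lam T D (T l (h l)) ls"
    have P: "pth lam T D v (l#ls) = (l, h l) # P'" using pth_take[OF ne, of v T ls] mx True unfolding P'_def by simp
    have S: "pstep T h v (l#ls) = pstep T (h(l := h l - 1)) (T l (h l)) ls"
      using True by (simp only: pstep.simps simp_thms if_True)
    have hyp: "\<forall>l'\<in>set ls. rem_rows lam D l' = {1..(h(l := h l - 1)) l'}"
    proof
      fix l' assume "l' \<in> set ls"
      then have "l' \<noteq> l" "l' \<in> set (l#ls)" using nl by auto
      then show "rem_rows lam D l' = {1..(h(l := h l - 1)) l'}" using Cons.prems(2) by simp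
    qed
    note IH = Cons.IH[OF dls hyp, of "T l (h l)", folded P'_def]
    have cols: "\<forall>b\<in>set P'. fst b \<in> set ls" using pth_cols[of lam T D "T l (h l)" ls] unfolding P'_def by auto
    have A: "\<forall>l'\<in>set (l#ls). rem_rows lam (D \<union> set ((l, h l) # P')) l' = {1..fst (pstep T (h(l := h l - 1)) (T l (h l)) ls) l'}"
    proof
      fix l' assume l': "l' \<in> set (l#ls)"
      show "rem_rows lam (D \<union> set ((l, h l) # P')) l' = {1..fst (pstep T (h(l := h l - 1)) (T l (h l)) ls) l'}"
      proof (cases "l' = l")
        case True
        have "rem_rows lam (D \<union> set ((l, h l) # P')) l = rem_rows lam D l - {k. (l,k) \<in> set ((l, h l) # P')}"
          by (rule rem_rows_union)
        also have "{k. (l,k) \<in> set ((l, h l) # P')} = {h l}"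
        proof -
          have "\<And>k. (l,k) \<notin> set P'" using cols nl by fastforce
          then show ?thesis by auto
        qed
        finally have X: "rem_rows lam (D \<union> set ((l, h l) # P')) l = rem_rows lam D l - {h l}" .
        have Y: "{1..h l} - {h l} = {1..h l - 1}" by auto
        have "rem_rows lam (D \<union> set ((l, h l) # P')) l = {1..h l - 1}" unfolding X rl Y ..
        moreover have "fst (pstep T (h(l := h l - 1)) (T l (h l)) ls) l = h l - 1"
          using pstep_other[OF nl] by simp
        ultimately show ?thesis using True by simp
      next
        case False
        then have l'': "l' \<in> set ls" using l' by simp
        have "rem_rows lam (D \<union> set ((l, h l) # P')) l' = rem_rows lam (D \<union> set P') l'"
          using False by (auto simp: rem_rows_def)
        then show ?thesis using IH l'' by (simp del: fun_upd_apply)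
      qed
    qed
    show ?thesis
    proof (intro conjI)
      show "\<forall>l'\<in>set (l#ls). rem_rows lam (D \<union> set (pth lam T D v (l#ls))) l' = {1..fst (pstep T h v (l#ls)) l'}"
        using A unfolding P S .
      show "pth lam T D v (l # ls) = [] \<longrightarrow> snd (pstep T h v (l # ls)) = v" unfolding P by simp
      show "pth lam T D v (l # ls) \<noteq> [] \<longrightarrow> snd (pstep T h v (l # ls)) = T (fst (last (pth lam T D v (l # ls)))) (snd (last (pth lam T D v (l # ls))))"
        unfolding P S using IH by (cases "P' = []") (simp_all del: fun_upd_apply)
    qed
  next
    case False
    have P: "pth lam T D v (l#ls) = pth lam T D v ls"
    proof (rule pth_skip)
      show "\<not> (rem_rows lam D l \<noteq> {} \<and> v \<le> T l (Max (rem_rows lam D l)))"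
      proof
        assume a: "rem_rows lam D l \<noteq> {} \<and> v \<le> T l (Max (rem_rows lam D l))"
        then have "1 \<le> h l" using rl by auto
        then have "Max {1..h l} = h l" by (intro Max_eqI) auto
        then show False using a rl False \<open>1 \<le> h l\<close> by auto
      qed
    qed
    have S: "pstep T h v (l#ls) = pstep T h v ls"
      using False by (simp only: pstep.simps if_False)
    have hyp: "\<forall>l'\<in>set ls. rem_rows lam D l' = {1..h l'}" using Cons.prems(2) by simp
    note IH = Cons.IH[OF dls hyp, of v]
    have cols: "\<forall>b\<in>set (pth lam T D v ls). fst b \<in> set ls" using pth_cols[of lam T D v ls] by auto
    have "rem_rows lam (D \<union> set (pth lam T D v ls)) l = rem_rows lam D l"
      using cols nl by (auto simp: rem_rows_def)
    then have "rem_rows lam (D \<union> set (pth lam T D v ls)) l = {1..fst (pstep T h v ls) l}"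
      using rl pstep_other[OF nl] by simp
    then show ?thesis using IH P S by auto
  qed
qed


fun hs :: "(nat\<Rightarrow>nat\<Rightarrow>nat) \<Rightarrow> (nat\<Rightarrow>nat) \<Rightarrow> nat list \<Rightarrow> nat list \<Rightarrow> nat \<Rightarrow> nat" where
  "hs T h [] ls = h"
| "hs T h (x#xs) ls = hs T (fst (pstep T h x ls)) xs ls"

lemma hs_append: "hs T h (xs @ [x]) ls = fst (pstep T (hs T h xs ls) x ls)"
  by (induction xs arbitrary: h) auto

lemma multi_nth: "m < length xs \<Longrightarrow> multi T h xs ls ! m = snd (pstep T (hs T h (take m xs) ls) (xs!m) ls)"
proof (induction xs arbitrary: h m)
  case Nil then show ?case by simp
next
  case (Cons x xs)
  obtain h1 v where p: "pstep T h x ls = (h1, v)" by (metis prod.exhaust)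
  show ?case
  proof (cases m)
    case 0 then show ?thesis using p by simp
  next
    case (Suc m')
    then show ?thesis using Cons p by simp
  qed
qed

lemma rem_rows_empty: "rem_rows lam {} l = {1..col_len lam l}"
  by (auto simp: rem_rows_def)

lemma scan_inv:
  fixes lam T j
  defines "c \<equiv> col_len lam j" and "ls \<equiv> [Suc j..<lam1 lam + 1]"
      and "xs0 \<equiv> map (\<lambda>m. T j (col_len lam j - m)) [0..<col_len lam j]"
  assumes jL: "j \<le> lam1 lam"
  shows "m \<le> c \<Longrightarrow> (\<forall>l \<in> set ls. rem_rows lam (scan_del lam T j m) l = {1..hs T (col_len lam) (take m xs0) ls l})
     \<and> rem_rows lam (scan_del lam T j m) j = {1..c - m}"
proof (induction m)
  case 0
  then show ?case by (simp add: rem_rows_empty c_def)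
next
  case (Suc m)
  define D where "D = scan_del lam T j m"
  have IH: "\<forall>l \<in> set ls. rem_rows lam D l = {1..hs T (col_len lam) (take m xs0) ls l}"
     "rem_rows lam D j = {1..c - m}" using Suc by (auto simp: D_def)
  have mc: "m < c" using Suc.prems by simp
  have ne: "rem_rows lam D j \<noteq> {}" using IH(2) mc by simp
  have mx: "Max (rem_rows lam D j) = c - m" unfolding IH(2) using mc by (intro Max_eqI) auto
  have up: "[j..<lam1 lam + 1] = j # ls" unfolding ls_def using jL by (simp add: upt_conv_Cons)
  define P where "P = pth lam T D (T j (c - m)) ls"
  have sp: "scan_path lam T j D = (j, c - m) # P"
  proof -
    have "low_seq lam T j D = ((j, c - m), T j (c - m)) # concat (map (\<lambda>l. if rem_rows lam D l = {} then []
                      else [((l, Max (rem_rows lam D l)), T l (Max (rem_rows lam D l)))]) ls)"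
      unfolding low_seq_def up using ne mx by simp
    then show ?thesis unfolding scan_path_def P_def using ewis_pth[of "T j (c - m)" lam D T ls] by (simp add: comp_def)
  qed
  have dls: "distinct ls" unfolding ls_def by simp
  have tk: "take (Suc m) xs0 = take m xs0 @ [T j (c - m)]"
    using mc unfolding xs0_def c_def by (simp add: take_Suc_conv_app_nth)
  note PH = pth_heights[OF dls IH(1), of T "T j (c - m)", folded P_def]
  have cols: "\<forall>b\<in>set P. fst b \<in> set ls" using pth_cols[of lam T D "T j (c - m)" ls] unfolding P_def by auto
  have jn: "j \<notin> set ls" unfolding ls_def by simp
  have sd: "scan_del lam T j (Suc m) = D \<union> set ((j, c - m) # P)" using sp by (simp add: D_def)
  show ?case
  proof (intro conjI ballI)
    fix l assume l: "l \<in> set ls"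
    then have "l \<noteq> j" using jn by auto
    then have "rem_rows lam (D \<union> set ((j, c - m) # P)) l = rem_rows lam (D \<union> set P) l"
      unfolding rem_rows_def by auto
    then show "rem_rows lam (scan_del lam T j (Suc m)) l = {1..hs T (col_len lam) (take (Suc m) xs0) ls l}"
      using PH l unfolding sd tk hs_append by simp
  next
    have "{k. (j,k) \<in> set ((j, c - m) # P)} = {c - m}"
    proof -
      have "\<And>k. (j,k) \<notin> set P" using cols jn by (metis fst_conv)
      then show ?thesis by auto
    qed
    then have X: "rem_rows lam (scan_del lam T j (Suc m)) j = rem_rows lam D j - {c - m}"
      unfolding sd rem_rows_union by simp
    have Y: "{1..c - m} - {c - m} = {1..c - Suc m}" by auto
    show "rem_rows lam (scan_del lam T j (Suc m)) j = {1..c - Suc m}" unfolding X IH(2) Y ..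
  qed
qed


lemma scanS_fold:
  assumes jL: "j \<le> lam1 lam" and i1: "1 \<le> i" and ic: "i \<le> col_len lam j"
  shows "scanS lam T j i = fold (\<lambda>l xs. sopc T l (col_len lam l) xs) [Suc j..<lam1 lam + 1]
            (map (\<lambda>m. T j (col_len lam j - m)) [0..<col_len lam j]) ! (col_len lam j - i)"
proof -
  define c where "c = col_len lam j"
  define ls where "ls = [Suc j..<lam1 lam + 1]"
  define xs0 where "xs0 = map (\<lambda>m. T j (col_len lam j - m)) [0..<col_len lam j]"
  define m where "m = c - i"
  have mc: "m < c" "m \<le> c" using i1 ic unfolding m_def c_def by auto
  define D where "D = scan_del lam T j m"
  have IH: "\<forall>l \<in> set ls. rem_rows lam D l = {1..hs T (col_len lam) (take m xs0) ls l}"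
     "rem_rows lam D j = {1..c - m}" using scan_inv[OF jL mc(2)[unfolded c_def]]
    unfolding D_def ls_def xs0_def c_def by auto
  have ne: "rem_rows lam D j \<noteq> {}" using IH(2) mc by simp
  have mx: "Max (rem_rows lam D j) = c - m" unfolding IH(2) using mc by (intro Max_eqI) auto
  have up: "[j..<lam1 lam + 1] = j # ls" unfolding ls_def using jL by (simp add: upt_conv_Cons)
  define P where "P = pth lam T D (T j (c - m)) ls"
  have sp: "scanP lam T j i = (j, c - m) # P"
  proof -
    have "low_seq lam T j D = ((j, c - m), T j (c - m)) # concat (map (\<lambda>l. if rem_rows lam D l = {} then []
                      else [((l, Max (rem_rows lam D l)), T l (Max (rem_rows lam D l)))]) ls)"
      unfolding low_seq_def up using ne mx by simp
    then have "scan_path lam T j D = (j, c - m) # P" unfolding scan_path_def P_def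
      using ewis_pth[of "T j (c - m)" lam D T ls] by (simp add: comp_def)
    moreover have "scanP lam T j i = scan_path lam T j D" by (simp add: scanP_def D_def m_def c_def)
    ultimately show ?thesis by simp
  qed
  have dls: "distinct ls" unfolding ls_def by simp
  note PH = pth_heights[OF dls IH(1), of T "T j (c - m)", folded P_def]
  have val: "scanS lam T j i = snd (pstep T (hs T (col_len lam) (take m xs0) ls) (T j (c - m)) ls)"
    unfolding scanS_def sp using PH by (cases "P = []") (auto split: prod.splits)
  have x0m: "xs0 ! m = T j (c - m)" using mc unfolding xs0_def c_def by simp
  have lx: "m < length xs0" using mc unfolding xs0_def c_def by simp
  have "fold (\<lambda>l xs. sopc T l (col_len lam l) xs) ls xs0 = multi T (col_len lam) xs0 ls"
    using multi_fold[OF dls, of T "col_len lam" xs0] by simp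
  then have "fold (\<lambda>l xs. sopc T l (col_len lam l) xs) ls xs0 ! m = snd (pstep T (hs T (col_len lam) (take m xs0) ls) (T j (c - m)) ls)"
    using multi_nth[OF lx] x0m by simp
  then show ?thesis using val unfolding ls_def xs0_def m_def c_def by simp
qed



fun gm :: "nat set \<Rightarrow> nat list \<Rightarrow> nat set" where
  "gm R [] = R"
| "gm R (b#bs) = gm (R - {Max {a\<in>R. a \<le> b}}) bs"

fun gmok :: "nat set \<Rightarrow> nat list \<Rightarrow> bool" where
  "gmok R [] = True"
| "gmok R (b#bs) = ((\<exists>a\<in>R. a \<le> b) \<and> gmok (R - {Max {a\<in>R. a \<le> b}}) bs)"

definition bsl :: "(nat\<Rightarrow>nat\<Rightarrow>nat) \<Rightarrow> nat \<Rightarrow> nat \<Rightarrow> nat list" where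
  "bsl T l k = map (T l) (rev [1..<k+1])"

lemma bsl_0[simp]: "bsl T l 0 = []" by (simp add: bsl_def)
lemma bsl_Suc: "bsl T l (Suc k) = T l (Suc k) # bsl T l k" by (simp add: bsl_def)
lemma set_bsl: "set (bsl T l k) = T l ` {1..k}" by (auto simp: bsl_def)

lemma gm_append: "gm R (xs @ ys) = gm (gm R xs) ys"
  by (induction R xs rule: gm.induct) auto

lemma gmok_append: "gmok R (xs @ ys) = (gmok R xs \<and> gmok (gm R xs) ys)"
  by (induction R xs rule: gm.induct) auto

lemma gm_insert_big:
  assumes "\<forall>b\<in>set bs. b < x" "x \<notin> R" "gmok R bs" "finite R"
  shows "gm (insert x R) bs = insert x (gm R bs)"
  using assms
proof (induction bs arbitrary: R)
  case Nil then show ?case by simp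
next
  case (Cons b bs)
  have bx: "b < x" using Cons.prems by simp
  have eqs: "{a\<in>insert x R. a \<le> b} = {a\<in>R. a \<le> b}" using bx by auto
  define M where "M = Max {a\<in>R. a \<le> b}"
  have ne: "{a\<in>R. a \<le> b} \<noteq> {}" using Cons.prems(3) by auto
  have "M \<in> {a\<in>R. a \<le> b}" unfolding M_def using ne Cons.prems(4) by (intro Max_in) auto
  then have "M \<le> b" by simp
  then have Mx: "M \<noteq> x" using bx by simp
  have "gm (insert x R) (b#bs) = gm (insert x (R - {M})) bs" using eqs Mx unfolding M_def by (simp add: insert_Diff_if)
  also have "\<dots> = insert x (gm (R - {M}) bs)" using Cons.IH[of "R - {M}"] Cons.prems unfolding M_def by auto
  finally show ?case unfolding M_def by simp
qed


lemma gmok_insert_big: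
  assumes "\<forall>b\<in>set bs. b < x" "x \<notin> R" "finite R"
  shows "gmok (insert x R) bs = gmok R bs"
  using assms
proof (induction bs arbitrary: R)
  case Nil then show ?case by simp
next
  case (Cons b bs)
  have bx: "b < x" using Cons.prems by simp
  have eqs: "{a\<in>insert x R. a \<le> b} = {a\<in>R. a \<le> b}" using bx by auto
  define M where "M = Max {a\<in>R. a \<le> b}"
  show ?case
  proof (cases "{a\<in>R. a \<le> b} = {}")
    case True
    then show ?thesis using eqs by auto
  next
    case ne: False
    have "M \<in> {a\<in>R. a \<le> b}" unfolding M_def using ne Cons.prems(3) by (intro Max_in) auto
    then have "M \<le> b" by simp
    then have Mx: "M \<noteq> x" using bx by simp
    have "gmok (insert x R) (b#bs) = ((\<exists>a\<in>R. a \<le> b) \<and> gmok (insert x (R - {M})) bs)"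
      using eqs Mx bx unfolding M_def by (auto simp: insert_Diff_if)
    also have "\<dots> = ((\<exists>a\<in>R. a \<le> b) \<and> gmok (R - {M}) bs)" using Cons.IH[of "R - {M}"] Cons.prems by auto
    finally show ?thesis unfolding M_def by simp
  qed
qed

definition incr_col :: "(nat\<Rightarrow>nat\<Rightarrow>nat) \<Rightarrow> nat \<Rightarrow> nat \<Rightarrow> bool" where
  "incr_col T l k \<longleftrightarrow> (\<forall>a b. 1 \<le> a \<longrightarrow> a < b \<longrightarrow> b \<le> k \<longrightarrow> T l a < T l b)"

lemma sopc_0: "sopc T l 0 xs = xs"
  by (induction xs) auto

lemma sopc_elems: "set (sopc T l k xs) \<subseteq> set xs \<union> T l ` {1..k}"
proof (induction xs arbitrary: k)
  case Nil then show ?case by simp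
next
  case (Cons x xs)
  show ?case
  proof (cases "1 \<le> k \<and> x \<le> T l k")
    case True
    have "T l ` {1..k-1} \<subseteq> T l ` {1..k}" by auto
    moreover have "T l k \<in> T l ` {1..k}" using True by auto
    moreover have eq: "sopc T l k (x#xs) = T l k # sopc T l (k-1) xs" using True by simp
    moreover note Cons[of "k-1"]
    ultimately show ?thesis unfolding eq set_simps by blast
  next
    case False
    then have "sopc T l k (x#xs) = x # sopc T l k xs" by (simp only: sopc.simps if_False)
    then show ?thesis using Cons[of k] by auto
  qed
qed

lemma sopc_length: "length (sopc T l k xs) = length xs"
  by (induction T l k xs rule: sopc.induct) auto

lemma sopc_set:
  assumes "sorted_wrt (>) xs" "incr_col T l k" "gmok (set xs) (bsl T l k)"
  shows "set (sopc T l k xs) = set (bsl T l k) \<union> gm (set xs) (bsl T l k) \<and> sorted_wrt (>) (sopc T l k xs)"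
  using assms
proof (induction xs arbitrary: k)
  case Nil
  then have "k = 0" by (cases k) (auto simp: bsl_Suc)
  then show ?case by simp
next
  case (Cons x xs)
  have sx: "sorted_wrt (>) xs" and xb: "\<forall>y\<in>set xs. y < x" using Cons.prems(1) by auto
  have xn: "x \<notin> set xs" using xb by auto
  have mono: "\<And>a b. 1 \<le> a \<Longrightarrow> a < b \<Longrightarrow> b \<le> k \<Longrightarrow> T l a < T l b" using Cons.prems(2) unfolding incr_col_def by blast
  show ?case
  proof (cases "1 \<le> k \<and> x \<le> T l k")
    case True
    obtain k' where k': "k = Suc k'" using True by (cases k) auto
    have bs: "bsl T l k = T l k # bsl T l k'" unfolding k' by (rule bsl_Suc)
    have Mx: "Max {a\<in>set (x#xs). a \<le> T l k} = x"
      using True xb by (intro Max_eqI) auto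
    have rm: "set (x#xs) - {x} = set xs" using xn by auto
    have ok: "gmok (set xs) (bsl T l k')" using Cons.prems(3) unfolding bs using Mx rm by simp
    have ic: "incr_col T l k'" using Cons.prems(2) unfolding incr_col_def k' by auto
    note IH = Cons.IH[OF sx ic ok]
    have sop: "sopc T l k (x#xs) = T l k # sopc T l k' xs" using True k' by simp
    have gmeq: "gm (set (x#xs)) (bsl T l k) = gm (set xs) (bsl T l k')" unfolding bs using Mx rm by simp
    have lt: "\<forall>y\<in>set (sopc T l k' xs). y < T l k"
    proof
      fix y assume "y \<in> set (sopc T l k' xs)"
      then have "y \<in> set xs \<union> T l ` {1..k'}" using sopc_elems by blast
      then show "y < T l k"
      proof
        assume "y \<in> set xs" then show ?thesis using xb True by fastforce
      next
        assume "y \<in> T l ` {1..k'}"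
        then obtain a where "1 \<le> a" "a \<le> k'" "y = T l a" by auto
        then show ?thesis using mono[of a k] k' by simp
      qed
    qed
    show ?thesis unfolding sop gmeq using IH lt unfolding bs by auto
  next
    case False
    have sop: "sopc T l k (x#xs) = x # sopc T l k xs" using False by (simp only: sopc.simps if_False)
    show ?thesis
    proof (cases "k = 0")
      case True
      then show ?thesis using Cons.prems(1) by (simp add: sopc_0)
    next
      case k0: False
      then have xbig: "T l k < x" using False by auto
      have allb: "\<forall>b\<in>set (bsl T l k). b < x"
      proof
        fix b assume "b \<in> set (bsl T l k)"
        then obtain a where "1 \<le> a" "a \<le> k" "b = T l a" unfolding set_bsl by auto
        then show "b < x" using mono[of a k] xbig by (cases "a = k") auto
      qed
      have ok: "gmok (set xs) (bsl T l k)" using Cons.prems(3) gmok_insert_big[OF allb xn] by simp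
      note IH = Cons.IH[OF sx Cons.prems(2) ok]
      have gmeq: "gm (set (x#xs)) (bsl T l k) = insert x (gm (set xs) (bsl T l k))"
        using gm_insert_big[OF allb xn ok] by simp
      have lt: "\<forall>y\<in>set (sopc T l k xs). y < x"
      proof
        fix y assume "y \<in> set (sopc T l k xs)"
        then have "y \<in> set xs \<union> T l ` {1..k}" using sopc_elems by blast
        then show "y < x"
        proof
          assume "y \<in> set xs" then show ?thesis using xb by auto
        next
          assume "y \<in> T l ` {1..k}"
          then have "y \<in> set (bsl T l k)" unfolding set_bsl .
          then show ?thesis using allb by auto
        qed
      qed
      show ?thesis unfolding sop gmeq using IH lt by auto
    qed
  qed
qed



lemma fold_upd_nth:
  assumes "distinct idx" "m \<le> length idx - 1"
  shows "(\<forall>x<m. fold (\<lambda>x f. f(idx ! Suc x := pi (idx ! x))) [0..<m] pi (idx ! Suc x) = pi (idx ! x))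
       \<and> (\<forall>p. (\<forall>x<m. p \<noteq> idx ! Suc x) \<longrightarrow> fold (\<lambda>x f. f(idx ! Suc x := pi (idx ! x))) [0..<m] pi p = pi p)"
  using assms(2)
proof (induction m)
  case 0 then show ?case by simp
next
  case (Suc m)
  define F where "F = fold (\<lambda>x f. f(idx ! Suc x := pi (idx ! x))) [0..<m] pi"
  have eq: "fold (\<lambda>x f. f(idx ! Suc x := pi (idx ! x))) [0..<Suc m] pi = F(idx ! Suc m := pi (idx ! m))"
    unfolding F_def by simp
  have mm: "m \<le> length idx - 1" using Suc.prems by simp
  have IH: "\<forall>x<m. F (idx ! Suc x) = pi (idx ! x)" "\<forall>p. (\<forall>x<m. p \<noteq> idx ! Suc x) \<longrightarrow> F p = pi p"
    using Suc.IH[OF mm] unfolding F_def by blast+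
  have len: "Suc m < length idx" using Suc.prems by simp
  show ?case unfolding eq
  proof (intro conjI allI impI)
    fix x assume x: "x < Suc m"
    show "(F(idx ! Suc m := pi (idx ! m))) (idx ! Suc x) = pi (idx ! x)"
    proof (cases "x = m")
      case True then show ?thesis by simp
    next
      case False
      then have "idx ! Suc x \<noteq> idx ! Suc m" using x len assms(1) by (simp add: nth_eq_iff_index_eq)
      then show ?thesis using IH(1) x False by simp
    qed
  next
    fix p assume "\<forall>x<Suc m. p \<noteq> idx ! Suc x"
    then show "(F(idx ! Suc m := pi (idx ! m))) p = pi p" using IH(2) by simp
  qed
qed

lemma rot_upd_hd: "rot_upd pi (a # qs) a = pi (last (a # qs))"
  by (simp add: rot_upd_def)

lemma rot_upd_nth:
  assumes "distinct (a # qs)" "x < length qs"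
  shows "rot_upd pi (a # qs) (qs ! x) = pi ((a # qs) ! x)"
proof -
  have ne: "qs ! x \<noteq> a" using assms by (metis distinct.simps(2) nth_mem)
  have "fold (\<lambda>x f. f((a # qs) ! Suc x := pi ((a # qs) ! x))) [0..<length qs] pi ((a # qs) ! Suc x) = pi ((a # qs) ! x)"
    using fold_upd_nth[OF assms(1), of "length qs" pi] assms(2) by simp
  then show ?thesis using ne unfolding rot_upd_def by simp
qed

lemma rot_upd_other:
  assumes "distinct (a # qs)" "p \<notin> set (a # qs)"
  shows "rot_upd pi (a # qs) p = pi p"
proof -
  have "\<forall>x<length qs. p \<noteq> (a # qs) ! Suc x" using assms(2) by auto
  then have "fold (\<lambda>x f. f((a # qs) ! Suc x := pi ((a # qs) ! x))) [0..<length qs] pi p = pi p"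
    using fold_upd_nth[OF assms(1), of "length qs" pi] by simp
  then show ?thesis using assms(2) unfolding rot_upd_def by simp
qed

definition cand :: "(nat \<Rightarrow> nat) \<Rightarrow> nat \<Rightarrow> nat \<Rightarrow> nat \<Rightarrow> nat \<Rightarrow> nat set" where
  "cand pi n c t p = {q. c < q \<and> q \<le> n \<and> pi p < pi q \<and> pi q \<le> t}"

lemma cand_finite: "finite (cand pi n c t p)"
  by (rule finite_subset[of _ "{..n}"]) (auto simp: cand_def)

lemma chain_step:
  assumes "pi p \<noteq> t" "\<exists>q. c < q \<and> q \<le> n \<and> pi p < pi q \<and> pi q \<le> t"
  defines "q0 \<equiv> LEAST q. c < q \<and> q \<le> n \<and> pi p < pi q \<and> pi q \<le> t"
  shows "chain pi n c t p (Suc f) = q0 # chain pi n c t q0 f"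
    and "c < q0" "q0 \<le> n" "pi p < pi q0" "pi q0 \<le> t"
    and "\<And>r. c < r \<Longrightarrow> r < q0 \<Longrightarrow> \<not> (pi p < pi r \<and> pi r \<le> t)"
    and "card (cand pi n c t q0) < card (cand pi n c t p)"
proof -
  show "chain pi n c t p (Suc f) = q0 # chain pi n c t q0 f" using assms(1,2) unfolding q0_def by (simp add: Let_def)
  have L: "c < q0 \<and> q0 \<le> n \<and> pi p < pi q0 \<and> pi q0 \<le> t" unfolding q0_def using assms(2) by (rule LeastI_ex)
  then show "c < q0" "q0 \<le> n" "pi p < pi q0" "pi q0 \<le> t" by auto
  show "\<And>r. c < r \<Longrightarrow> r < q0 \<Longrightarrow> \<not> (pi p < pi r \<and> pi r \<le> t)"
  proof
    fix r assume r: "c < r" "r < q0" "pi p < pi r \<and> pi r \<le> t"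
    then have "r \<le> n" using L by simp
    then have "q0 \<le> r" unfolding q0_def using r by (intro Least_le) auto
    then show False using r by simp
  qed
  have "cand pi n c t q0 \<subset> cand pi n c t p"
  proof
    show "cand pi n c t q0 \<subseteq> cand pi n c t p" using L by (auto simp: cand_def)
    show "cand pi n c t q0 \<noteq> cand pi n c t p" using L by (auto simp: cand_def)
  qed
  then show "card (cand pi n c t q0) < card (cand pi n c t p)" using cand_finite by (rule psubset_card_mono[rotated])
qed

lemma chain_stop1: "pi p = t \<Longrightarrow> chain pi n c t p (Suc f) = []" by simp
lemma chain_stop2: "\<not> (\<exists>q. c < q \<and> q \<le> n \<and> pi p < pi q \<and> pi q \<le> t) \<Longrightarrow> chain pi n c t p (Suc f) = []" by auto

lemma chain_basic:
  "(\<forall>q\<in>set (chain pi n c t p f). c < q \<and> q \<le> n \<and> pi q \<le> t) \<and> sorted_wrt (<) (map pi (p # chain pi n c t p f))"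
proof (induction f arbitrary: p)
  case 0 then show ?case by simp
next
  case (Suc f)
  show ?case
  proof (cases "pi p \<noteq> t \<and> (\<exists>q. c < q \<and> q \<le> n \<and> pi p < pi q \<and> pi q \<le> t)")
    case True
    then have ex: "\<exists>q. c < q \<and> q \<le> n \<and> pi p < pi q \<and> pi q \<le> t" and ne: "pi p \<noteq> t" by auto
    note S1 = chain_step(1)[OF ne ex, of f]
    note S = chain_step(2-7)[OF ne ex]
    define q0 where "q0 = (LEAST q. c < q \<and> q \<le> n \<and> pi p < pi q \<and> pi q \<le> t)"
    note IH = Suc[of q0]
    have "\<forall>y\<in>set (map pi (q0 # chain pi n c t q0 f)). pi p < y"
    proof
      fix y assume "y \<in> set (map pi (q0 # chain pi n c t q0 f))"
      then have "y = pi q0 \<or> y \<in> set (map pi (chain pi n c t q0 f))" by auto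
      then show "pi p < y"
      proof
        assume "y = pi q0" then show ?thesis using S(3) q0_def by simp
      next
        assume "y \<in> set (map pi (chain pi n c t q0 f))"
        then have "pi q0 < y" using IH by auto
        then show ?thesis using S(3) q0_def by simp
      qed
    qed
    then show ?thesis using S1 S IH unfolding q0_def[symmetric] by auto
  next
    case False
    then have "chain pi n c t p (Suc f) = []" by auto
    then show ?thesis by simp
  qed
qed


lemma chain_last:
  assumes "card (cand pi n c t p) \<le> f" "pi p \<le> t" "pi p = t \<or> (\<exists>q. c < q \<and> q \<le> n \<and> pi q = t)"
  shows "pi (last (p # chain pi n c t p f)) = t"
  using assms
proof (induction f arbitrary: p)
  case 0
  show ?case
  proof (cases "pi p = t")
    case True then show ?thesis by simp
  next
    case False
    then obtain q where q: "c < q" "q \<le> n" "pi q = t" using 0 by auto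
    then have "q \<in> cand pi n c t p" using False 0(2) by (auto simp: cand_def)
    then have "card (cand pi n c t p) > 0" using cand_finite by (auto simp: card_gt_0_iff)
    then show ?thesis using 0 by simp
  qed
next
  case (Suc f)
  show ?case
  proof (cases "pi p = t")
    case True then show ?thesis by simp
  next
    case ne: False
    then obtain q where q: "c < q" "q \<le> n" "pi q = t" using Suc by auto
    have ex: "\<exists>q. c < q \<and> q \<le> n \<and> pi p < pi q \<and> pi q \<le> t" using q ne Suc.prems(2) by auto
    define q0 where "q0 = (LEAST q. c < q \<and> q \<le> n \<and> pi p < pi q \<and> pi q \<le> t)"
    note S1 = chain_step(1)[OF ne ex, of f, folded q0_def]
    note S = chain_step(2-7)[OF ne ex, folded q0_def]
    have "pi (last (q0 # chain pi n c t q0 f)) = t"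
      using Suc.IH[of q0] S Suc.prems q by auto
    then show ?thesis unfolding S1 by simp
  qed
qed

lemma chain_noret:
  assumes "\<forall>r. c < r \<and> r \<le> cw \<longrightarrow> \<not> (pi p < pi r \<and> pi r \<le> t)"
  shows "\<forall>q\<in>set (chain pi n c t p f). cw < q"
  using assms
proof (induction f arbitrary: p)
  case 0 then show ?case by simp
next
  case (Suc f)
  show ?case
  proof (cases "pi p \<noteq> t \<and> (\<exists>q. c < q \<and> q \<le> n \<and> pi p < pi q \<and> pi q \<le> t)")
    case True
    then have ex: "\<exists>q. c < q \<and> q \<le> n \<and> pi p < pi q \<and> pi q \<le> t" and ne: "pi p \<noteq> t" by auto
    define q0 where "q0 = (LEAST q. c < q \<and> q \<le> n \<and> pi p < pi q \<and> pi q \<le> t)"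
    note S1 = chain_step(1)[OF ne ex, of f, folded q0_def]
    note S = chain_step(2-7)[OF ne ex, folded q0_def]
    have big: "cw < q0" using Suc.prems S(1,3,4) by (meson not_le)
    have "\<forall>r. c < r \<and> r \<le> cw \<longrightarrow> \<not> (pi q0 < pi r \<and> pi r \<le> t)"
      using Suc.prems S(3) by (meson order.strict_trans)
    then show ?thesis using Suc.IH[of q0] big unfolding S1 by auto
  next
    case False
    then have "chain pi n c t p (Suc f) = []" by auto
    then show ?thesis by simp
  qed
qed

lemma chain_win:
  assumes "p \<le> cw" "cw \<le> n" "card (cand pi n c t p) \<le> f" "pi p \<le> t"
  shows "\<exists>k < length (p # chain pi n c t p f).
     (\<forall>x < length (p # chain pi n c t p f). ((p # chain pi n c t p f) ! x \<le> cw \<longleftrightarrow> x \<le> k))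
     \<and> (\<forall>r. c < r \<and> r \<le> cw \<and> pi r \<le> t \<longrightarrow> pi r \<le> pi ((p # chain pi n c t p f) ! k))
     \<and> pi ((p # chain pi n c t p f) ! k) \<le> t"
  using assms
proof (induction f arbitrary: p)
  case 0
  have "cand pi n c t p = {}" using 0 cand_finite by auto
  then have "\<forall>r. c < r \<and> r \<le> cw \<and> pi r \<le> t \<longrightarrow> pi r \<le> pi p" 
  proof (intro allI impI)
    fix r assume r: "c < r \<and> r \<le> cw \<and> pi r \<le> t"
    show "pi r \<le> pi p"
    proof (rule ccontr)
      assume "\<not> pi r \<le> pi p"
      then have "r \<in> cand pi n c t p" using r 0(2) by (auto simp: cand_def)
      then show False using \<open>cand pi n c t p = {}\<close> by simp
    qed
  qed
  then show ?case using 0 by (intro exI[of _ 0]) auto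
next
  case (Suc f)
  show ?case
  proof (cases "pi p \<noteq> t \<and> (\<exists>q. c < q \<and> q \<le> n \<and> pi p < pi q \<and> pi q \<le> t)")
    case True
    then have ex: "\<exists>q. c < q \<and> q \<le> n \<and> pi p < pi q \<and> pi q \<le> t" and ne: "pi p \<noteq> t" by auto
    define q0 where "q0 = (LEAST q. c < q \<and> q \<le> n \<and> pi p < pi q \<and> pi q \<le> t)"
    note S1 = chain_step(1)[OF ne ex, of f, folded q0_def]
    note S = chain_step(2-7)[OF ne ex, folded q0_def]
    show ?thesis
    proof (cases "q0 \<le> cw")
      case True
      have "card (cand pi n c t q0) \<le> f" using S(6) Suc.prems(3) by simp
      then obtain k where k: "k < length (q0 # chain pi n c t q0 f)"
        "\<forall>x < length (q0 # chain pi n c t q0 f). ((q0 # chain pi n c t q0 f) ! x \<le> cw \<longleftrightarrow> x \<le> k)"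
        "\<forall>r. c < r \<and> r \<le> cw \<and> pi r \<le> t \<longrightarrow> pi r \<le> pi ((q0 # chain pi n c t q0 f) ! k)"
        "pi ((q0 # chain pi n c t q0 f) ! k) \<le> t"
        using Suc.IH[of q0] True Suc.prems S(4) by auto
      show ?thesis unfolding S1
      proof (intro exI[of _ "Suc k"] conjI)
        show "Suc k < length (p # q0 # chain pi n c t q0 f)" using k(1) by simp
        show "\<forall>x<length (p # q0 # chain pi n c t q0 f). ((p # q0 # chain pi n c t q0 f) ! x \<le> cw) = (x \<le> Suc k)"
        proof (intro allI impI)
          fix x assume x: "x < length (p # q0 # chain pi n c t q0 f)"
          show "((p # q0 # chain pi n c t q0 f) ! x \<le> cw) = (x \<le> Suc k)"
          proof (cases x)
            case 0 then show ?thesis using Suc.prems(1) by simp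
          next
            case (Suc x') then show ?thesis using k(2) x by simp
          qed
        qed
        show "\<forall>r. c < r \<and> r \<le> cw \<and> pi r \<le> t \<longrightarrow> pi r \<le> pi ((p # q0 # chain pi n c t q0 f) ! Suc k)"
          using k(3) by simp
        show "pi ((p # q0 # chain pi n c t q0 f) ! Suc k) \<le> t" using k(4) by simp
      qed
    next
      case False
      have none: "\<forall>r. c < r \<and> r \<le> cw \<longrightarrow> \<not> (pi p < pi r \<and> pi r \<le> t)"
        using S(5) False by (meson le_less_trans not_le)
      have none2: "\<forall>r. c < r \<and> r \<le> cw \<longrightarrow> \<not> (pi q0 < pi r \<and> pi r \<le> t)"
        using none S(3) by (meson order.strict_trans)
      have big: "\<forall>q\<in>set (chain pi n c t q0 f). cw < q" using chain_noret[OF none2] by blast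
      show ?thesis unfolding S1
      proof (intro exI[of _ 0] conjI)
        show "0 < length (p # q0 # chain pi n c t q0 f)" by simp
        show "\<forall>x<length (p # q0 # chain pi n c t q0 f). ((p # q0 # chain pi n c t q0 f) ! x \<le> cw) = (x \<le> 0)"
        proof (intro allI impI)
          fix x assume x: "x < length (p # q0 # chain pi n c t q0 f)"
          show "((p # q0 # chain pi n c t q0 f) ! x \<le> cw) = (x \<le> 0)"
          proof (cases x)
            case 0 then show ?thesis using Suc.prems(1) by simp
          next
            case (Suc x')
            show ?thesis
            proof (cases x')
              case 0 then show ?thesis using Suc False by simp
            next
              case (Suc x'')
              then have "(p # q0 # chain pi n c t q0 f) ! x \<in> set (chain pi n c t q0 f)"
                using x \<open>x = Suc x'\<close> by simp
              then show ?thesis using big \<open>x = Suc x'\<close> by auto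
            qed
          qed
        qed
        show "\<forall>r. c < r \<and> r \<le> cw \<and> pi r \<le> t \<longrightarrow> pi r \<le> pi ((p # q0 # chain pi n c t q0 f) ! 0)"
          using none by auto
        show "pi ((p # q0 # chain pi n c t q0 f) ! 0) \<le> t" using Suc.prems by simp
      qed
    qed
  next
    case False
    then have ch: "chain pi n c t p (Suc f) = []" by auto
    have "\<forall>r. c < r \<and> r \<le> cw \<and> pi r \<le> t \<longrightarrow> pi r \<le> pi p"
    proof (intro allI impI)
      fix r assume r: "c < r \<and> r \<le> cw \<and> pi r \<le> t"
      show "pi r \<le> pi p"
      proof (cases "pi p = t")
        case True then show ?thesis using r by simp
      next
        case F: False
        have "r \<le> n" using r Suc.prems(2) by simp
        then show ?thesis using False r F by (meson not_le)
      qed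
    qed
    then show ?thesis unfolding ch using Suc.prems by (intro exI[of _ 0]) auto
  qed
qed


lemma single_box:
  fixes pi :: "nat \<Rightarrow> nat" and n c t i :: nat
  assumes inj: "inj_on pi {1..n}" and img: "pi ` {1..n} = {1..n}"
    and i1: "1 \<le> i" and ic: "i \<le> c" and cn: "c \<le> n" and pit: "pi i \<le> t"
    and tpos: "pi i = t \<or> (\<exists>q. c < q \<and> q \<le> n \<and> pi q = t)"
  defines "qs \<equiv> chain pi n c t i n"
  defines "pi' \<equiv> rot_upd pi (i # qs)"
  shows "pi' i = t"
    and "\<forall>p. p \<notin> set qs \<longrightarrow> p \<noteq> i \<longrightarrow> pi' p = pi p"
    and "\<forall>q\<in>set qs. c < q \<and> q \<le> n"
    and "\<And>cw. c \<le> cw \<Longrightarrow> cw \<le> n \<Longrightarrow> (\<exists>u. u \<in> pi ` ({i} \<union> {c<..cw}) \<and> u \<le> t \<and> pi i \<le> u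
            \<and> (\<forall>r. c < r \<and> r \<le> cw \<and> pi r \<le> t \<longrightarrow> pi r \<le> u)
            \<and> pi' ` {1..cw} = (pi ` {1..cw} - {u}) \<union> {t})"
    and "inj_on pi' {1..n}" and "pi' ` {1..n} = {1..n}"
proof -
  define ids where "ids = i # qs"
  have B: "(\<forall>q\<in>set qs. c < q \<and> q \<le> n \<and> pi q \<le> t) \<and> sorted_wrt (<) (map pi ids)"
    unfolding qs_def ids_def by (rule chain_basic)
  show qsr: "\<forall>q\<in>set qs. c < q \<and> q \<le> n" using B by auto
  have dmap: "distinct (map pi ids)" using B strict_sorted_iff by blast
  then have dids: "distinct ids" by (simp add: distinct_map)
  have idsn: "\<forall>p\<in>set ids. 1 \<le> p \<and> p \<le> n" using qsr i1 ic cn unfolding ids_def by auto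
  have cardc: "card (cand pi n c t i) \<le> n"
  proof -
    have "cand pi n c t i \<subseteq> {1..n}" using i1 ic by (auto simp: cand_def)
    then show ?thesis using card_mono[of "{1..n}"] by fastforce
  qed
  have lastt: "pi (last ids) = t"
    unfolding ids_def qs_def using chain_last[OF cardc pit tpos] .
  show pi'i: "pi' i = t" unfolding pi'_def using rot_upd_hd lastt ids_def by simp
  have dids': "distinct (i # qs)" using dids ids_def by simp
  show oth: "\<forall>p. p \<notin> set qs \<longrightarrow> p \<noteq> i \<longrightarrow> pi' p = pi p"
    unfolding pi'_def using rot_upd_other[OF dids'] by simp
  have shift: "\<And>x. Suc x < length ids \<Longrightarrow> pi' (ids ! Suc x) = pi (ids ! x)"
    unfolding pi'_def ids_def using rot_upd_nth[OF dids'] by simp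
  have injv: "p = q" if "p \<in> set ids" "q \<in> {1..n}" "pi p = pi q" for p q
  proof -
    have "p \<in> {1..n}" using idsn that(1) by simp
    then show ?thesis using inj_onD[OF inj that(3)] that(2) by simp
  qed
  have W: "\<exists>u. u \<in> pi ` ({i} \<union> {c<..cw}) \<and> u \<le> t \<and> pi i \<le> u
            \<and> (\<forall>r. c < r \<and> r \<le> cw \<and> pi r \<le> t \<longrightarrow> pi r \<le> u)
            \<and> pi' ` {1..cw} = (pi ` {1..cw} - {u}) \<union> {t}" if cw: "c \<le> cw" "cw \<le> n" for cw
  proof -
    obtain k where k: "k < length ids" "\<forall>x < length ids. (ids ! x \<le> cw \<longleftrightarrow> x \<le> k)"
      "\<forall>r. c < r \<and> r \<le> cw \<and> pi r \<le> t \<longrightarrow> pi r \<le> pi (ids ! k)" "pi (ids ! k) \<le> t"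
      using chain_win[of i cw n pi c t n] ic cw cardc pit unfolding ids_def qs_def by auto
    define u where "u = pi (ids ! k)"
    have kin: "ids ! k \<in> set ids" using k(1) by simp
    have u1: "u \<in> pi ` ({i} \<union> {c<..cw})"
    proof (cases k)
      case 0 then show ?thesis unfolding u_def ids_def by simp
    next
      case (Suc k')
      then have "ids ! k \<in> set qs" using k(1) unfolding ids_def by simp
      then have "c < ids ! k" using qsr by auto
      moreover have "ids ! k \<le> cw" using k(1,2) by simp
      ultimately show ?thesis unfolding u_def by auto
    qed
    have u2: "pi i \<le> u"
    proof (cases k)
      case 0 then show ?thesis unfolding u_def ids_def by simp
    next
      case (Suc k')
      have "map pi ids ! 0 < map pi ids ! k" using sorted_wrt_nth_less[OF B[THEN conjunct2], of 0 k] k(1) Suc by simp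
      moreover have "map pi ids ! k = pi (ids ! k)" using nth_map[OF k(1)] .
      moreover have "map pi ids ! 0 = pi i" unfolding ids_def by simp
      ultimately show ?thesis unfolding u_def by simp
    qed
    have nth_in: "\<And>x. x < length ids \<Longrightarrow> ids ! x \<in> set ids" by simp
    have Weq: "pi' ` {1..cw} = (pi ` {1..cw} - {u}) \<union> {t}"
    proof
      show "pi' ` {1..cw} \<subseteq> (pi ` {1..cw} - {u}) \<union> {t}"
      proof
        fix w assume "w \<in> pi' ` {1..cw}"
        then obtain p where p: "p \<in> {1..cw}" "w = pi' p" by auto
        show "w \<in> (pi ` {1..cw} - {u}) \<union> {t}"
        proof (cases "p = i")
          case True then show ?thesis using p pi'i by simp
        next
          case pni: False
          show ?thesis
          proof (cases "p \<in> set qs")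
            case True
            then obtain x where x: "x < length qs" "p = qs ! x" by (auto simp: in_set_conv_nth)
            have sx: "Suc x < length ids" "p = ids ! Suc x" using x unfolding ids_def by auto
            have "Suc x \<le> k" using k(2) sx p by auto
            then have xk: "x < k" "x \<noteq> k" by auto
            have wv: "w = pi (ids ! x)" using p(2) shift[OF sx(1)] sx(2) by simp
            have xle: "ids ! x \<le> cw" using k(2) xk sx(1) by auto
            have x1: "1 \<le> ids ! x" using idsn sx(1) by auto
            have "ids ! x \<noteq> ids ! k" using dids xk k(1) sx(1) by (simp add: nth_eq_iff_index_eq)
            then have "w \<noteq> u" unfolding wv u_def using injv[of "ids ! k" "ids ! x"] idsn sx(1) k(1) by force
            moreover have "w \<in> pi ` {1..cw}" using wv xle x1 by auto
            ultimately show ?thesis by simp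
          next
            case False
            then have wv: "w = pi p" using oth pni p(2) by simp
            have "p \<notin> set ids" using False pni unfolding ids_def by simp
            then have "p \<noteq> ids ! k" using kin by auto
            then have "w \<noteq> u" unfolding wv u_def using injv[OF kin, of p] p(1) cw by force
            then show ?thesis using wv p(1) by simp
          qed
        qed
      qed
      show "(pi ` {1..cw} - {u}) \<union> {t} \<subseteq> pi' ` {1..cw}"
      proof
        fix w assume w: "w \<in> (pi ` {1..cw} - {u}) \<union> {t}"
        show "w \<in> pi' ` {1..cw}"
        proof (cases "w = t")
          case True
          then show ?thesis using pi'i i1 ic cw by force
        next
          case False
          then obtain p where p: "p \<in> {1..cw}" "w = pi p" "w \<noteq> u" using w by auto
          show ?thesis
          proof (cases "p \<in> set ids")
            case True
            then obtain x where x: "x < length ids" "p = ids ! x" by (auto simp: in_set_conv_nth)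
            have "x \<le> k" using k(2) x p(1) by auto
            moreover have "x \<noteq> k" using p x unfolding u_def by auto
            ultimately have xk: "x < k" by simp
            then have sx: "Suc x < length ids" using k(1) by simp
            have "ids ! Suc x \<le> cw" using k(2) sx xk by auto
            moreover have "1 \<le> ids ! Suc x" using idsn sx by auto
            moreover have "pi' (ids ! Suc x) = w" using shift[OF sx] x p by simp
            ultimately show ?thesis by force
          next
            case False
            then have "p \<notin> set qs" "p \<noteq> i" unfolding ids_def by auto
            then have "pi' p = w" using oth p by simp
            then show ?thesis using p(1) by force
          qed
        qed
      qed
    qed
    show ?thesis
    proof (intro exI conjI)
      show "u \<in> pi ` ({i} \<union> {c<..cw})" by (fact u1)
      show "u \<le> t" unfolding u_def by (fact k(4))
      show "pi i \<le> u" by (fact u2)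
      show "\<forall>r. c < r \<and> r \<le> cw \<and> pi r \<le> t \<longrightarrow> pi r \<le> u" unfolding u_def by (fact k(3))
      show "pi' ` {1..cw} = (pi ` {1..cw} - {u}) \<union> {t}" by (fact Weq)
    qed
  qed
  show "\<And>cw. c \<le> cw \<Longrightarrow> cw \<le> n \<Longrightarrow> (\<exists>u. u \<in> pi ` ({i} \<union> {c<..cw}) \<and> u \<le> t \<and> pi i \<le> u
            \<and> (\<forall>r. c < r \<and> r \<le> cw \<and> pi r \<le> t \<longrightarrow> pi r \<le> u)
            \<and> pi' ` {1..cw} = (pi ` {1..cw} - {u}) \<union> {t})" by (rule W)
  obtain u where u: "u \<in> pi ` ({i} \<union> {c<..n})" "u \<le> t" "pi i \<le> u"
     "\<forall>r. c < r \<and> r \<le> n \<and> pi r \<le> t \<longrightarrow> pi r \<le> u" "pi' ` {1..n} = (pi ` {1..n} - {u}) \<union> {t}"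
    using W[of n] cn by auto
  have "t \<le> u" using tpos u(3,4) by auto
  then have ut: "u = t" using u(2) by simp
  have tin: "t \<in> pi ` {1..n}" using tpos i1 ic cn by force
  show img': "pi' ` {1..n} = {1..n}" using u(5) ut tin img by auto
  show "inj_on pi' {1..n}"
  proof (rule eq_card_imp_inj_on)
    show "finite {1..n}" by simp
    show "card (pi' ` {1..n}) = card {1..n}" unfolding img' ..
  qed
qed



lemma rot_upd_single: "rot_upd pi [i] = pi"
  by (simp add: rot_upd_def)

lemma row_step:
  fixes pi :: "nat \<Rightarrow> nat" and A B :: "nat \<Rightarrow> nat" and J :: "nat set" and cwf :: "nat \<Rightarrow> nat" and Rf :: "nat \<Rightarrow> nat set"
  assumes inj: "inj_on pi {1..n}" and img: "pi ` {1..n} = {1..n}"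
    and cn: "c \<le> n" and i1: "1 \<le> i" and ic: "i \<le> c"
    and rl: "\<forall>p. 1 \<le> p \<and> p \<le> i \<longrightarrow> pi p = A p"
    and rr: "\<forall>p. i < p \<and> p \<le> c \<longrightarrow> pi p = B p"
    and Ainc: "\<forall>p q. 1 \<le> p \<and> p < q \<and> q \<le> i \<longrightarrow> A p < A q"
    and Binc: "\<forall>p q. i \<le> p \<and> p < q \<and> q \<le> c \<longrightarrow> B p < B q"
    and AB: "A i \<le> B i" and Bn: "B i \<in> {1..n}"
    and win: "\<forall>j\<in>J. c \<le> cwf j \<and> cwf j \<le> n \<and> finite (Rf j)
        \<and> pi ` ({1..i} \<union> {c<..cwf j}) = gm (Rf j) (map B (rev [Suc i..<c+1]))
        \<and> gmok (Rf j) (map B (rev [Suc i..<c+1]))"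
  defines "pi' \<equiv> (if A i = B i then pi else rot_upd pi (i # chain pi n c (B i) i n))"
  shows "inj_on pi' {1..n}" "pi' ` {1..n} = {1..n}"
    "\<forall>p. 1 \<le> p \<and> p \<le> i - 1 \<longrightarrow> pi' p = A p"
    "\<forall>p. i - 1 < p \<and> p \<le> c \<longrightarrow> pi' p = B p"
    "\<forall>j\<in>J. pi' ` ({1..i-1} \<union> {c<..cwf j}) = gm (Rf j) (map B (rev [i..<c+1]))
        \<and> gmok (Rf j) (map B (rev [i..<c+1]))"
proof -
  define t where "t = B i"
  define qs where "qs = chain pi n c t i n"
  have n0: "0 < n" using i1 ic cn by simp
  have pii: "pi i = A i" using rl i1 by simp
  have pit: "pi i \<le> t" using pii AB t_def by simp
  have pe: "pi' = rot_upd pi (i # qs)"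
  proof (cases "A i = B i")
    case True
    then have "pi i = t" using pii t_def by simp
    moreover obtain n' where "n = Suc n'" using n0 by (cases n) auto
    ultimately have "qs = []" unfolding qs_def by simp
    then show ?thesis unfolding pi'_def using True rot_upd_single by simp
  next
    case False then show ?thesis unfolding pi'_def qs_def t_def by simp
  qed
  have tpos: "pi i = t \<or> (\<exists>q. c < q \<and> q \<le> n \<and> pi q = t)"
  proof -
    obtain p where p: "p \<in> {1..n}" "pi p = t" using Bn img t_def by (metis imageE)
    show ?thesis
    proof (cases "p < i")
      case True
      then have "pi p = A p" using rl p by simp
      moreover have "A p < A i" using Ainc True p by simp
      ultimately show ?thesis using p pii AB t_def by simp
    next
      case False
      show ?thesis
      proof (cases "p = i")
        case True then show ?thesis using p by simp
      next
        case F2: False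
        then have pi: "i < p" using False by simp
        show ?thesis
        proof (cases "p \<le> c")
          case True
          then have "pi p = B p" using rr pi by simp
          moreover have "B i < B p" using Binc pi True by simp
          ultimately show ?thesis using p t_def by simp
        next
          case F3: False
          then have "c < p" "p \<le> n" using p by auto
          then show ?thesis using p(2) by blast
        qed
      qed
    qed
  qed
  note SB = single_box[OF inj img i1 ic cn pit tpos, folded qs_def, folded pe]
  show "inj_on pi' {1..n}" "pi' ` {1..n} = {1..n}" using SB(5,6) by auto
  have same: "\<And>p. p \<le> c \<Longrightarrow> p \<noteq> i \<Longrightarrow> pi' p = pi p"
  proof -
    fix p assume "p \<le> c" "p \<noteq> i"
    then have "p \<notin> set qs" using SB(3) by auto
    then show "pi' p = pi p" using SB(2) \<open>p \<noteq> i\<close> by simp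
  qed
  show "\<forall>p. 1 \<le> p \<and> p \<le> i - 1 \<longrightarrow> pi' p = A p" using same rl ic by auto
  show "\<forall>p. i - 1 < p \<and> p \<le> c \<longrightarrow> pi' p = B p"
  proof (intro allI impI)
    fix p assume p: "i - 1 < p \<and> p \<le> c"
    show "pi' p = B p"
    proof (cases "p = i")
      case True then show ?thesis using SB(1) t_def by simp
    next
      case False then show ?thesis using same rr p by auto
    qed
  qed
  show "\<forall>j\<in>J. pi' ` ({1..i-1} \<union> {c<..cwf j}) = gm (Rf j) (map B (rev [i..<c+1]))
        \<and> gmok (Rf j) (map B (rev [i..<c+1]))"
  proof
    fix j assume j: "j \<in> J"
    define cw where "cw = cwf j"
    define R where "R = Rf j"
    define bs where "bs = map B (rev [Suc i..<c+1])"
    have W: "c \<le> cw" "cw \<le> n" "finite R" "pi ` ({1..i} \<union> {c<..cw}) = gm R bs" "gmok R bs"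
      using win j unfolding cw_def R_def bs_def by auto
    define P where "P = gm R bs"
    have bs': "map B (rev [i..<c+1]) = bs @ [t]"
    proof -
      have "[i..<c+1] = i # [Suc i..<c+1]" using ic by (simp add: upt_conv_Cons)
      then show ?thesis unfolding bs_def t_def by simp
    qed
    obtain u where u: "u \<in> pi ` ({i} \<union> {c<..cw})" "u \<le> t" "pi i \<le> u"
        "\<forall>r. c < r \<and> r \<le> cw \<and> pi r \<le> t \<longrightarrow> pi r \<le> u" "pi' ` {1..cw} = (pi ` {1..cw} - {u}) \<union> {t}"
      using SB(4)[OF W(1,2)] by blast
    have Pdef: "P = pi ` ({1..i} \<union> {c<..cw})" using W(4) unfolding P_def by simp
    have finP: "finite P" unfolding Pdef by simp
    have uP: "u \<in> P" unfolding Pdef using u(1) i1 by auto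
    have maxu: "Max {a\<in>P. a \<le> t} = u"
    proof (rule Max_eqI)
      show "finite {a\<in>P. a \<le> t}" using finP by simp
      show "u \<in> {a\<in>P. a \<le> t}" using uP u(2) by simp
      fix a assume "a \<in> {a\<in>P. a \<le> t}"
      then have a: "a \<in> pi ` ({1..i} \<union> {c<..cw})" "a \<le> t" unfolding Pdef by auto
      obtain r where r2: "a = pi r" and r1: "r \<in> {1..i} \<union> {c<..cw}" using a(1) by (rule imageE)
      note r = r1 r2 a(2)
      show "a \<le> u"
      proof (cases "r \<in> {1..i}")
        case True
        then have "pi r = A r" using rl by simp
        moreover have "A r \<le> A i"
        proof (cases "r = i")
          case False
          then have "1 \<le> r \<and> r < i \<and> i \<le> i" using True by auto
          then show ?thesis using Ainc by (meson less_imp_le)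
        qed simp
        ultimately show ?thesis using r(2) pii u(3) by simp
      next
        case False
        then show ?thesis using r u(4) by auto
      qed
    qed
    have okt: "gmok P [t]" using pit i1 unfolding Pdef by auto
    have gm_new: "gm R (map B (rev [i..<c+1])) = P - {u}"
      unfolding bs' gm_append P_def[symmetric] using maxu by simp
    have ok_new: "gmok R (map B (rev [i..<c+1]))"
      unfolding bs' gmok_append using W(5) okt unfolding P_def by simp
    have sub1: "{1..i-1} \<union> {c<..cw} = {1..cw} - {i..c}" using i1 ic W(1) by auto
    have subs: "{1..cw} - {i..c} \<subseteq> {1..n}" "{i..c} \<subseteq> {1..n}" using W(2) cn i1 by auto
    have img1: "pi' ` ({1..i-1} \<union> {c<..cw}) = pi' ` {1..cw} - pi' ` {i..c}"
      unfolding sub1 using inj_on_image_set_diff[OF SB(5) subs] .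
    have img2: "pi' ` {i..c} = {t} \<union> pi ` {i<..c}"
    proof -
      have "{i..c} = insert i {i<..c}" using ic by auto
      then have "pi' ` {i..c} = insert (pi' i) (pi' ` {i<..c})" by simp
      moreover have "pi' ` {i<..c} = pi ` {i<..c}" using same by (intro image_cong) auto
      ultimately show ?thesis using SB(1) by simp
    qed
    have sub2: "{1..i} \<union> {c<..cw} = {1..cw} - {i<..c}" using i1 ic W(1) by auto
    have subs2: "{1..cw} - {i<..c} \<subseteq> {1..n}" "{i<..c} \<subseteq> {1..n}" using cn W(2) by auto
    have img3: "P = pi ` {1..cw} - pi ` {i<..c}"
      unfolding Pdef sub2 using inj_on_image_set_diff[OF inj subs2] .
    have tu: "t \<in> P \<Longrightarrow> u = t"
    proof -
      assume "t \<in> P"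
      then have "t \<le> Max {a\<in>P. a \<le> t}" using finP by (intro Max_ge) auto
      then show "u = t" using maxu u(2) by simp
    qed
    have "pi' ` ({1..i-1} \<union> {c<..cw}) = P - {u}"
      unfolding img1 img2 u(5) img3 using tu img3 by auto
    then show "pi' ` ({1..i-1} \<union> {c<..cwf j}) = gm (Rf j) (map B (rev [i..<c+1]))
        \<and> gmok (Rf j) (map B (rev [i..<c+1]))"
      using gm_new ok_new unfolding cw_def R_def by simp
  qed
qed


definition gst :: "nat \<Rightarrow> (nat \<Rightarrow> nat) \<Rightarrow> (nat \<Rightarrow> nat) \<Rightarrow> nat \<Rightarrow> (nat \<Rightarrow> nat) \<Rightarrow> nat \<Rightarrow> nat \<Rightarrow> nat" where
  "gst n A B c pi i = (if A i = B i then pi else rot_upd pi (i # chain pi n c (B i) i n))"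

definition RI :: "nat \<Rightarrow> (nat \<Rightarrow> nat) \<Rightarrow> (nat \<Rightarrow> nat) \<Rightarrow> nat \<Rightarrow> nat set \<Rightarrow> (nat \<Rightarrow> nat) \<Rightarrow> (nat \<Rightarrow> nat set)
     \<Rightarrow> nat \<Rightarrow> (nat \<Rightarrow> nat) \<Rightarrow> bool" where
  "RI n A B c J cwf Rf i pi \<longleftrightarrow> inj_on pi {1..n} \<and> pi ` {1..n} = {1..n}
     \<and> (\<forall>p. 1 \<le> p \<and> p \<le> i \<longrightarrow> pi p = A p) \<and> (\<forall>p. i < p \<and> p \<le> c \<longrightarrow> pi p = B p)
     \<and> (\<forall>j\<in>J. pi ` ({1..i} \<union> {c<..cwf j}) = gm (Rf j) (map B (rev [Suc i..<c+1]))
          \<and> gmok (Rf j) (map B (rev [Suc i..<c+1])))"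

lemma col_iter:
  assumes cn: "c \<le> n"
    and Ainc: "\<forall>p q. 1 \<le> p \<and> p < q \<and> q \<le> c \<longrightarrow> A p < A q"
    and Binc: "\<forall>p q. 1 \<le> p \<and> p < q \<and> q \<le> c \<longrightarrow> B p < B q"
    and AB: "\<forall>p. 1 \<le> p \<and> p \<le> c \<longrightarrow> A p \<le> B p \<and> B p \<in> {1..n}"
    and cw: "\<forall>j\<in>J. c \<le> cwf j \<and> cwf j \<le> n \<and> finite (Rf j)"
  shows "k \<le> c \<Longrightarrow> RI n A B c J cwf Rf k pi \<Longrightarrow> RI n A B c J cwf Rf 0 (fold (\<lambda>i pi. gst n A B c pi i) (rev [1..<k+1]) pi)"
proof (induction k arbitrary: pi)
  case 0 then show ?case by simp
next
  case (Suc k)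
  define i where "i = Suc k"
  have R: "inj_on pi {1..n}" "pi ` {1..n} = {1..n}" "\<forall>p. 1 \<le> p \<and> p \<le> i \<longrightarrow> pi p = A p"
    "\<forall>p. i < p \<and> p \<le> c \<longrightarrow> pi p = B p"
    "\<forall>j\<in>J. pi ` ({1..i} \<union> {c<..cwf j}) = gm (Rf j) (map B (rev [Suc i..<c+1]))
          \<and> gmok (Rf j) (map B (rev [Suc i..<c+1]))"
    using Suc.prems(2) unfolding RI_def i_def by auto
  have i1: "1 \<le> i" and ic: "i \<le> c" using Suc.prems(1) unfolding i_def by auto
  have Ainc': "\<forall>p q. 1 \<le> p \<and> p < q \<and> q \<le> i \<longrightarrow> A p < A q" using Ainc ic by auto
  have Binc': "\<forall>p q. i \<le> p \<and> p < q \<and> q \<le> c \<longrightarrow> B p < B q" using Binc i1 by auto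
  have ABi: "A i \<le> B i" "B i \<in> {1..n}" using AB i1 ic by auto
  have win: "\<forall>j\<in>J. c \<le> cwf j \<and> cwf j \<le> n \<and> finite (Rf j)
        \<and> pi ` ({1..i} \<union> {c<..cwf j}) = gm (Rf j) (map B (rev [Suc i..<c+1]))
        \<and> gmok (Rf j) (map B (rev [Suc i..<c+1]))" using R(5) cw by auto
  note RS = row_step[OF R(1,2) cn i1 ic R(3,4) Ainc' Binc' ABi win]
  have new: "RI n A B c J cwf Rf k (gst n A B c pi i)"
    unfolding RI_def gst_def using RS unfolding i_def by simp
  have "fold (\<lambda>i pi. gst n A B c pi i) (rev [1..<Suc k+1]) pi = fold (\<lambda>i pi. gst n A B c pi i) (rev [1..<k+1]) (gst n A B c pi i)"
    unfolding i_def by simp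
  then show ?case using Suc.IH[OF _ new] Suc.prems(1) by simp
qed



lemma fold_concat_gen: "fold f (concat xss) s = fold (\<lambda>xs s. fold f xs s) xss s"
  by (induction xss arbitrary: s) auto

lemma length_filter_mono: "(\<forall>x. P x \<longrightarrow> Q x) \<Longrightarrow> length (filter P xs) \<le> length (filter Q xs)"
  by (induction xs) auto

lemma col_len_le: "is_partition n lam \<Longrightarrow> col_len lam j \<le> n"
  unfolding is_partition_def col_len_def by (metis length_filter_le)

lemma col_len_anti: "j \<le> j' \<Longrightarrow> col_len lam j' \<le> col_len lam j"
  unfolding col_len_def by (rule length_filter_mono) auto

lemma shape_iff: "(j, i) \<in> shape lam \<longleftrightarrow> 1 \<le> j \<and> j \<le> lam1 lam \<and> 1 \<le> i \<and> i \<le> col_len lam j"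
  unfolding shape_def by simp

lemma ss_vals: "semistandard n lam T \<Longrightarrow> 1 \<le> j \<Longrightarrow> j \<le> lam1 lam \<Longrightarrow> 1 \<le> i \<Longrightarrow> i \<le> col_len lam j
   \<Longrightarrow> 1 \<le> T j i \<and> T j i \<le> n"
proof -
  assume a: "semistandard n lam T" "1 \<le> j" "j \<le> lam1 lam" "1 \<le> i" "i \<le> col_len lam j"
  then have "(j, i) \<in> shape lam" unfolding shape_iff by simp
  then show ?thesis using a(1) unfolding semistandard_def by auto
qed

lemma ss_row: "semistandard n lam T \<Longrightarrow> 1 \<le> j \<Longrightarrow> Suc j \<le> lam1 lam \<Longrightarrow> 1 \<le> i \<Longrightarrow> i \<le> col_len lam (Suc j)
   \<Longrightarrow> T j i \<le> T (Suc j) i"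
proof -
  assume a: "semistandard n lam T" "1 \<le> j" "Suc j \<le> lam1 lam" "1 \<le> i" "i \<le> col_len lam (Suc j)"
  have "i \<le> col_len lam j" using a(5) col_len_anti[of j "Suc j" lam] by simp
  then have "(j, i) \<in> shape lam" "(j + 1, i) \<in> shape lam" using a unfolding shape_iff by auto
  then show ?thesis using a(1) unfolding semistandard_def by auto
qed

lemma ss_col: "semistandard n lam T \<Longrightarrow> 1 \<le> j \<Longrightarrow> j \<le> lam1 lam \<Longrightarrow> 1 \<le> a \<Longrightarrow> a < b \<Longrightarrow> b \<le> col_len lam j
   \<Longrightarrow> T j a < T j b"
proof (induction b)
  case 0 then show ?case by simp
next
  case (Suc b)
  have sh: "(j, b) \<in> shape lam" "(j, b + 1) \<in> shape lam" using Suc.prems unfolding shape_iff by auto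
  then have st: "T j b < T j (Suc b)" using Suc.prems(1) unfolding semistandard_def by auto
  show ?case
  proof (cases "a = b")
    case True then show ?thesis using st by simp
  next
    case False
    then have "T j a < T j b" using Suc by simp
    then show ?thesis using st by simp
  qed
qed

definition xs0 :: "nat list \<Rightarrow> (nat\<Rightarrow>nat\<Rightarrow>nat) \<Rightarrow> nat \<Rightarrow> nat list" where
  "xs0 lam T j = map (\<lambda>m. T j (col_len lam j - m)) [0..<col_len lam j]"

definition Kf :: "nat list \<Rightarrow> (nat\<Rightarrow>nat\<Rightarrow>nat) \<Rightarrow> nat \<Rightarrow> nat \<Rightarrow> nat list" where
  "Kf lam T j l = fold (\<lambda>l' xs. sopc T l' (col_len lam l') xs) [Suc j..<l+1] (xs0 lam T j)"

lemma set_xs0: "set (xs0 lam T j) = T j ` {1..col_len lam j}"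
proof -
  have "(\<lambda>m. col_len lam j - m) ` {0..<col_len lam j} = {1..col_len lam j}"
  proof
    show "(\<lambda>m. col_len lam j - m) ` {0..<col_len lam j} \<subseteq> {1..col_len lam j}" by auto
    show "{1..col_len lam j} \<subseteq> (\<lambda>m. col_len lam j - m) ` {0..<col_len lam j}"
    proof
      fix x assume "x \<in> {1..col_len lam j}"
      then have "x = col_len lam j - (col_len lam j - x)" "col_len lam j - x \<in> {0..<col_len lam j}" by auto
      then show "x \<in> (\<lambda>m. col_len lam j - m) ` {0..<col_len lam j}" by blast
    qed
  qed
  moreover have "set (xs0 lam T j) = T j ` ((\<lambda>m. col_len lam j - m) ` {0..<col_len lam j})"
    unfolding xs0_def set_map image_image by simp
  ultimately show ?thesis by simp
qed
lemma dummy_xs0: True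
  by simp

lemma sorted_xs0:
  assumes "\<forall>a b. 1 \<le> a \<and> a < b \<and> b \<le> col_len lam j \<longrightarrow> T j a < T j b"
  shows "sorted_wrt (>) (xs0 lam T j)"
  unfolding xs0_def sorted_wrt_map
proof (rule sorted_wrt_mono_rel[OF _ sorted_wrt_upt])
  fix x y assume "x \<in> set [0..<col_len lam j]" "y \<in> set [0..<col_len lam j]" "x < y"
  then have "1 \<le> col_len lam j - y" "col_len lam j - y < col_len lam j - x" "col_len lam j - x \<le> col_len lam j" by auto
  then show "T j (col_len lam j - x) > T j (col_len lam j - y)" using assms by blast
qed


definition INV :: "nat \<Rightarrow> nat list \<Rightarrow> (nat\<Rightarrow>nat\<Rightarrow>nat) \<Rightarrow> nat \<Rightarrow> (nat \<Rightarrow> nat) \<Rightarrow> bool" where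
  "INV n lam T l pi \<longleftrightarrow> inj_on pi {1..n} \<and> pi ` {1..n} = {1..n}
     \<and> (\<forall>p. 1 \<le> p \<and> p \<le> col_len lam l \<longrightarrow> pi p = T l p)
     \<and> (\<forall>j. 1 \<le> j \<and> j \<le> l \<longrightarrow> pi ` {1..col_len lam j} = set (Kf lam T j l)
            \<and> sorted_wrt (>) (Kf lam T j l) \<and> length (Kf lam T j l) = col_len lam j)"

lemma Kf_Suc: "j \<le> l \<Longrightarrow> Kf lam T j (Suc l) = sopc T (Suc l) (col_len lam (Suc l)) (Kf lam T j l)"
  unfolding Kf_def by simp

lemma Kf_self: "Kf lam T j j = xs0 lam T j"
  unfolding Kf_def by simp

lemma length_xs0: "length (xs0 lam T j) = col_len lam j"
  unfolding xs0_def by simp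

lemma INV_step:
  assumes ip: "is_partition n lam" and ss: "semistandard n lam T"
    and l1: "1 \<le> l" and lL: "Suc l \<le> lam1 lam" and I: "INV n lam T l pi"
  shows "INV n lam T (Suc l) (fold (\<lambda>b pi. gstep n lam T pi b) (map (\<lambda>i. (Suc l, i)) (rev [1..<col_len lam (Suc l) + 1])) pi)"
proof -
  define c where "c = col_len lam (Suc l)"
  define A where "A = T l"
  define B where "B = T (Suc l)"
  have fe: "fold (\<lambda>b pi. gstep n lam T pi b) (map (\<lambda>i. (Suc l, i)) (rev [1..<c + 1])) pi
      = fold (\<lambda>i pi. gst n A B c pi i) (rev [1..<c+1]) pi"
  proof -
    have "(\<lambda>b pi. gstep n lam T pi b) \<circ> (\<lambda>i. (Suc l, i)) = (\<lambda>i pi. gst n A B c pi i)"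
      unfolding gstep_def gst_def A_def B_def c_def by (auto simp: fun_eq_iff)
    then show ?thesis by (simp add: fold_map)
  qed
  have cl: "c \<le> col_len lam l" unfolding c_def by (rule col_len_anti) simp
  have cn: "c \<le> n" unfolding c_def by (rule col_len_le[OF ip])
  have Ainc: "\<forall>p q. 1 \<le> p \<and> p < q \<and> q \<le> c \<longrightarrow> A p < A q"
    using ss_col[OF ss l1, of _ _] lL cl unfolding A_def by auto
  have Binc: "\<forall>p q. 1 \<le> p \<and> p < q \<and> q \<le> c \<longrightarrow> B p < B q"
    using ss_col[OF ss, of "Suc l"] lL unfolding B_def c_def by auto
  have AB: "\<forall>p. 1 \<le> p \<and> p \<le> c \<longrightarrow> A p \<le> B p \<and> B p \<in> {1..n}"
    using ss_row[OF ss l1 lL] ss_vals[OF ss, of "Suc l"] lL unfolding A_def B_def c_def by auto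
  define J where "J = {1..l}"
  define Rf where "Rf = (\<lambda>j. set (Kf lam T j l))"
  have cjl: "\<And>j. j \<le> l \<Longrightarrow> c \<le> col_len lam j" unfolding c_def by (rule col_len_anti) simp
  have cw: "\<forall>j\<in>J. c \<le> col_len lam j \<and> col_len lam j \<le> n \<and> finite (Rf j)"
    using cjl col_len_le[OF ip] unfolding J_def Rf_def by auto
  have Iu: "inj_on pi {1..n}" "pi ` {1..n} = {1..n}" "\<forall>p. 1 \<le> p \<and> p \<le> col_len lam l \<longrightarrow> pi p = T l p"
    "\<forall>j. 1 \<le> j \<and> j \<le> l \<longrightarrow> pi ` {1..col_len lam j} = set (Kf lam T j l)
            \<and> sorted_wrt (>) (Kf lam T j l) \<and> length (Kf lam T j l) = col_len lam j"
    using I unfolding INV_def by auto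
  have R0: "RI n A B c J (col_len lam) Rf c pi"
    unfolding RI_def
  proof (intro conjI)
    show "inj_on pi {1..n}" "pi ` {1..n} = {1..n}" by (fact Iu(1), fact Iu(2))
    show "\<forall>p. 1 \<le> p \<and> p \<le> c \<longrightarrow> pi p = A p" using Iu(3) cl unfolding A_def by auto
    show "\<forall>p. c < p \<and> p \<le> c \<longrightarrow> pi p = B p" by auto
    show "\<forall>j\<in>J. pi ` ({1..c} \<union> {c<..col_len lam j}) = gm (Rf j) (map B (rev [Suc c..<c + 1])) \<and>
        gmok (Rf j) (map B (rev [Suc c..<c + 1]))"
    proof
      fix j assume j: "j \<in> J"
      then have "c \<le> col_len lam j" using cjl unfolding J_def by auto
      then have "{1..c} \<union> {c<..col_len lam j} = {1..col_len lam j}" by auto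
      then show "pi ` ({1..c} \<union> {c<..col_len lam j}) = gm (Rf j) (map B (rev [Suc c..<c + 1])) \<and>
        gmok (Rf j) (map B (rev [Suc c..<c + 1]))" using Iu(4) j unfolding J_def Rf_def by auto
    qed
  qed
  define pi' where "pi' = fold (\<lambda>i pi. gst n A B c pi i) (rev [1..<c+1]) pi"
  have R1: "RI n A B c J (col_len lam) Rf 0 pi'"
    unfolding pi'_def using col_iter[OF cn Ainc Binc AB cw, of c pi] R0 by simp
  have Ru: "inj_on pi' {1..n}" "pi' ` {1..n} = {1..n}" "\<forall>p. 0 < p \<and> p \<le> c \<longrightarrow> pi' p = B p"
    "\<forall>j\<in>J. pi' ` ({1..0} \<union> {c<..col_len lam j}) = gm (Rf j) (map B (rev [Suc 0..<c+1]))
          \<and> gmok (Rf j) (map B (rev [Suc 0..<c+1]))"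
    using R1 unfolding RI_def by auto
  have bs: "map B (rev [Suc 0..<c+1]) = bsl T (Suc l) c" unfolding bsl_def B_def by simp
  have top: "pi' ` {1..c} = set (bsl T (Suc l) c)"
  proof -
    have "pi' ` {1..c} = B ` {1..c}" using Ru(3) by (intro image_cong) auto
    then show ?thesis unfolding set_bsl B_def by simp
  qed
  have ic: "incr_col T (Suc l) c" unfolding incr_col_def using Binc unfolding B_def by auto
  have P3: "\<forall>p. 1 \<le> p \<and> p \<le> col_len lam (Suc l) \<longrightarrow> pi' p = T (Suc l) p" using Ru(3) unfolding B_def c_def by auto
  have P4: "\<forall>j. 1 \<le> j \<and> j \<le> Suc l \<longrightarrow> pi' ` {1..col_len lam j} = set (Kf lam T j (Suc l)) \<and> sorted_wrt (>) (Kf lam T j (Suc l))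
         \<and> length (Kf lam T j (Suc l)) = col_len lam j"
  proof (intro allI impI)
    fix j assume j: "1 \<le> j \<and> j \<le> Suc l"
    show "pi' ` {1..col_len lam j} = set (Kf lam T j (Suc l)) \<and> sorted_wrt (>) (Kf lam T j (Suc l))
         \<and> length (Kf lam T j (Suc l)) = col_len lam j"
    proof (cases "j = Suc l")
      case True
      have "set (Kf lam T j (Suc l)) = T (Suc l) ` {1..c}" unfolding True Kf_self set_xs0 c_def ..
      moreover have "pi' ` {1..c} = T (Suc l) ` {1..c}" using top unfolding set_bsl .
      moreover have "sorted_wrt (>) (xs0 lam T (Suc l))" by (rule sorted_xs0) (use Binc in \<open>auto simp: B_def c_def\<close>)
      ultimately show ?thesis unfolding True Kf_self using length_xs0 c_def by simp
    next
      case False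
      then have jl: "j \<in> J" "j \<le> l" using j unfolding J_def by auto
      have K: "pi ` {1..col_len lam j} = set (Kf lam T j l)" "sorted_wrt (>) (Kf lam T j l)" "length (Kf lam T j l) = col_len lam j"
        using Iu(4) j jl by auto
      have W: "pi' ` {c<..col_len lam j} = gm (set (Kf lam T j l)) (bsl T (Suc l) c)"
        "gmok (set (Kf lam T j l)) (bsl T (Suc l) c)" using Ru(4) jl(1) bs unfolding Rf_def by auto
      note SO = sopc_set[OF K(2) ic W(2)]
      have KS: "Kf lam T j (Suc l) = sopc T (Suc l) c (Kf lam T j l)" unfolding c_def using Kf_Suc[OF jl(2)] .
      have split: "{1..col_len lam j} = {1..c} \<union> {c<..col_len lam j}" using cjl[OF jl(2)] by auto
      have "pi' ` {1..col_len lam j} = set (Kf lam T j (Suc l))"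
        unfolding split image_Un top W(1) KS using SO by simp
      moreover have "length (Kf lam T j (Suc l)) = col_len lam j" unfolding KS sopc_length using K(3) .
      ultimately show ?thesis using SO KS by simp
    qed
  qed
  have "INV n lam T (Suc l) pi'" unfolding INV_def using Ru(1,2) P3 P4 by blast
  then show ?thesis unfolding fe[unfolded c_def] pi'_def[unfolded c_def, symmetric] .
qed


lemma INV_base:
  assumes ip: "is_partition n lam" and ss: "semistandard n lam T" and L1: "1 \<le> lam1 lam"
  shows "INV n lam T 1 (pi11 n lam T)"
proof -
  define c where "c = col_len lam 1"
  define S where "S = sorted_list_of_set ({1..n} - T 1 ` {1..c})"
  define pi where "pi = pi11 n lam T"
  have cn: "c \<le> n" unfolding c_def by (rule col_len_le[OF ip])
  have pv: "\<And>p. pi p = (if 1 \<le> p \<and> p \<le> c then T 1 p else S ! (p - c - 1))"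
    unfolding pi_def pi11_def S_def c_def by simp
  have Tinc: "\<forall>a b. 1 \<le> a \<and> a < b \<and> b \<le> c \<longrightarrow> T 1 a < T 1 b"
    using ss_col[OF ss _ L1] unfolding c_def by auto
  have Tinj: "inj_on (T 1) {1..c}"
  proof (rule inj_onI)
    fix a b assume ab: "a \<in> {1..c}" "b \<in> {1..c}" "T 1 a = T 1 b"
    show "a = b"
    proof (rule ccontr)
      assume "a \<noteq> b"
      then have "a < b \<or> b < a" by auto
      then show False using Tinc ab by (metis atLeastAtMost_iff less_irrefl)
    qed
  qed
  have Tsub: "T 1 ` {1..c} \<subseteq> {1..n}" using ss_vals[OF ss _ L1] unfolding c_def by auto
  have cardT: "card (T 1 ` {1..c}) = c" using card_image[OF Tinj] by simp
  have setS: "set S = {1..n} - T 1 ` {1..c}" unfolding S_def by simp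
  have lenS: "length S = n - c"
  proof -
    have "length S = card ({1..n} - T 1 ` {1..c})" unfolding S_def by simp
    also have "\<dots> = n - c" using card_Diff_subset[OF _ Tsub] cardT by simp
    finally show ?thesis .
  qed
  have lowimg: "pi ` {1..c} = T 1 ` {1..c}" using pv by (intro image_cong) auto
  have highimg: "pi ` {c<..n} = set S"
  proof
    show "pi ` {c<..n} \<subseteq> set S"
    proof
      fix x assume "x \<in> pi ` {c<..n}"
      then obtain p where p: "p \<in> {c<..n}" "x = pi p" by auto
      then have "x = S ! (p - c - 1)" using pv by simp
      moreover have "p - c - 1 < length S" using p lenS by auto
      ultimately show "x \<in> set S" by simp
    qed
    show "set S \<subseteq> pi ` {c<..n}"
    proof
      fix x assume "x \<in> set S"
      then obtain k where k: "k < length S" "S ! k = x" by (auto simp: in_set_conv_nth)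
      define p where "p = k + c + 1"
      have "p \<in> {c<..n}" using k lenS unfolding p_def by auto
      moreover have "pi p = x" using pv k unfolding p_def by simp
      ultimately show "x \<in> pi ` {c<..n}" by force
    qed
  qed
  have split: "{1..n} = {1..c} \<union> {c<..n}" using cn by auto
  have img: "pi ` {1..n} = {1..n}" unfolding split image_Un lowimg highimg setS using Tsub cn by auto
  have inj: "inj_on pi {1..n}"
  proof (rule eq_card_imp_inj_on)
    show "finite {1..n}" by simp
    show "card (pi ` {1..n}) = card {1..n}" unfolding img ..
  qed
  have K1: "Kf lam T 1 1 = xs0 lam T 1" by (rule Kf_self)
  show ?thesis unfolding INV_def pi_def[symmetric]
  proof (intro conjI)
    show "inj_on pi {1..n}" "pi ` {1..n} = {1..n}" by (fact inj, fact img)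
    show "\<forall>p. 1 \<le> p \<and> p \<le> col_len lam 1 \<longrightarrow> pi p = T 1 p" using pv unfolding c_def by simp
    show "\<forall>j. 1 \<le> j \<and> j \<le> 1 \<longrightarrow> pi ` {1..col_len lam j} = set (Kf lam T j 1) \<and> sorted_wrt (>) (Kf lam T j 1)
        \<and> length (Kf lam T j 1) = col_len lam j"
    proof (intro allI impI)
      fix j :: nat assume "1 \<le> j \<and> j \<le> 1"
      then have j: "j = 1" by simp
      have "sorted_wrt (>) (xs0 lam T 1)" by (rule sorted_xs0) (use Tinc in \<open>auto simp: c_def\<close>)
      then show "pi ` {1..col_len lam j} = set (Kf lam T j 1) \<and> sorted_wrt (>) (Kf lam T j 1)
        \<and> length (Kf lam T j 1) = col_len lam j"
        unfolding j K1 set_xs0 using lowimg length_xs0 unfolding c_def by simp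
    qed
  qed
qed

definition Pi_l :: "nat \<Rightarrow> nat list \<Rightarrow> (nat\<Rightarrow>nat\<Rightarrow>nat) \<Rightarrow> nat \<Rightarrow> nat \<Rightarrow> nat" where
  "Pi_l n lam T l = fold (\<lambda>j pi. fold (\<lambda>b pi. gstep n lam T pi b) (map (\<lambda>i. (j, i)) (rev [1..<col_len lam j + 1])) pi)
                      [2..<l+1] (pi11 n lam T)"

lemma INV_all:
  assumes ip: "is_partition n lam" and ss: "semistandard n lam T"
  shows "1 \<le> l \<Longrightarrow> l \<le> lam1 lam \<Longrightarrow> INV n lam T l (Pi_l n lam T l)"
proof (induction l)
  case 0 then show ?case by simp
next
  case (Suc l)
  show ?case
  proof (cases "l = 0")
    case True
    then have "Pi_l n lam T (Suc l) = pi11 n lam T" unfolding Pi_l_def by simp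
    then show ?thesis using INV_base[OF ip ss] Suc.prems True by simp
  next
    case False
    then have l1: "1 \<le> l" by simp
    have IH: "INV n lam T l (Pi_l n lam T l)" using Suc.IH l1 Suc.prems by simp
    have "[2..<Suc l + 1] = [2..<l+1] @ [Suc l]" using l1 by simp
    then have "Pi_l n lam T (Suc l) = fold (\<lambda>b pi. gstep n lam T pi b) (map (\<lambda>i. (Suc l, i)) (rev [1..<col_len lam (Suc l) + 1])) (Pi_l n lam T l)"
      unfolding Pi_l_def by simp
    then show ?thesis using INV_step[OF ip ss l1 Suc.prems(2) IH] by simp
  qed
qed

lemma piT_eq: "piT n lam T = Pi_l n lam T (lam1 lam)"
  unfolding piT_def Pi_l_def greedy_boxes_def fold_concat_gen by (simp add: fold_map comp_def)

lemma sorted_list_rev: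
  assumes "sorted_wrt (>) K"
  shows "sorted_list_of_set (set K) = rev K"
proof -
  have s: "sorted_wrt (<) (rev K)" using assms by (simp add: sorted_wrt_rev)
  then have "sorted (rev K)" "distinct (rev K)" by (auto simp: strict_sorted_iff)
  then show ?thesis using sorted_list_of_set_sort_remdups[of "rev K"] by (simp add: distinct_remdups_id sorted_sort_id)
qed

theorem main:
  fixes n :: nat and lam :: "nat list" and T :: "nat \<Rightarrow> nat \<Rightarrow> nat"
  assumes ip: "is_partition n lam" and ss: "semistandard n lam T"
  shows "\<forall>(j, i) \<in> shape lam. Ytab lam (piT n lam T) j i = scanS lam T j i"
proof (intro ballI, clarify)
  fix j i assume "(j, i) \<in> shape lam"
  then have ji: "1 \<le> j" "j \<le> lam1 lam" "1 \<le> i" "i \<le> col_len lam j" unfolding shape_iff by auto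
  have L1: "1 \<le> lam1 lam" using ji by simp
  have I: "INV n lam T (lam1 lam) (piT n lam T)" unfolding piT_eq using INV_all[OF ip ss L1] by simp
  define K where "K = Kf lam T j (lam1 lam)"
  have K: "piT n lam T ` {1..col_len lam j} = set K" "sorted_wrt (>) K" "length K = col_len lam j"
    using I ji unfolding INV_def K_def by auto
  have "Ytab lam (piT n lam T) j i = rev K ! (i - 1)"
    unfolding Ytab_def K(1) sorted_list_rev[OF K(2)] ..
  also have "\<dots> = K ! (col_len lam j - i)" using ji K(3) by (simp add: rev_nth)
  also have "\<dots> = scanS lam T j i" unfolding K_def Kf_def xs0_def using scanS_fold[OF ji(2,3,4)] by simp
  finally show "Ytab lam (piT n lam T) j i = scanS lam T j i" .
qed



theorem corollary5p3:
  fixes n :: nat and lam :: "nat list" and T :: "nat \<Rightarrow> nat \<Rightarrow> nat"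
  assumes "0 < n"
    and "is_partition n lam"
    and "lam \<noteq> replicate n 0"
    and "lam ! (n - 1) = 0"
    and "semistandard n lam T"
  shows "\<forall>(j, i) \<in> shape lam. Ytab lam (piT n lam T) j i = scanS lam T j i"
  using main[OF assms(2) assms(5)] .

end
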